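(* Let $\mathcal{A}$ be a (finite) activation algebra, $O$ a finite set of objects of $\mathcal{T}_\mathcal{A}$, $S\in O$, and $M$ a set of morphisms of $\mathcal{T}_\mathcal{A}$ whose domains and codomains lie in $O$. Then the Safra automaton $\mathfrak{S}(\mathcal{A},S,M)$ accepts a sequence $\tau\in M^\omega$ if and only if $\mathrm{dom}(\tau_0)=S$ and $\tau$ describes a path through $\mathcal{T}_\mathcal{A}$ which satisfies the trace condition.
   Context: An activation algebra $\mathcal{A}=(A,\le,\vee,0,\alpha)$ is a finite join-semilattice $(A,\le,\vee)$ with least element $0$, together with a distinguished element $\alpha\in A$ with $\alpha\neq 0$. The category $\mathcal{T}_\mathcal{A}$ has the finite sets as objects; a morphism $R\colon X\to Y$ is a relation $R\subseteq X\times A\times Y$; the composite of $R\colon X\to Y$ and $R'\colon Y\to Z$ is $R'\circ R=\{(x,c,z)\mid \exists y\in Y,\ a,b\in A:\ (x,a,y)\in R,\ (y,b,z)\in R',\ a\vee b=c\}$, and the identity is $1_X=\{(x,0,x)\mid x\in X\}$. A sequence $\tau\in M^\omega$ of morphisms describes a path if $\mathrm{cod}(\tau_i)=\mathrm{dom}(\tau_{i+1})$ for all $i$; write $P(n<m)=\tau_{m-1}\circ\cdots\circ\tau_n$ for $n<m$. Such a path satisfies the trace condition if there exist a strictly increasing sequence $k_0<k_1<\cdots$ of natural numbers and elements $s_i\in\mathrm{dom}(\tau_{k_i})$ with $(s_i,\alpha,s_{i+1})\in P(k_i<k_{i+1})$ for all $i$. Safra boards. Fix a countable set $\mathcal{C}\supseteq\omega$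 of chips. A Safra board on $\mathcal{A}$ and a finite set $X$ is a pair $(\Theta,\sigma)$ where the control $\Theta\subseteq\mathcal{C}$ is a finite set with a linear order $\le$, and $\sigma\colon X\times A\to\mathcal{P}(\mathcal{P}(\Theta))$, such that every $\gamma\in\Theta$ belongs to some $S\in\sigma(x,a)$. The elements $S\in\sigma(x,a)$ are called stacks (bottom = $\le$-least, top = $\le$-greatest element). A chip $\gamma\in\Theta$ is covered if it is not the top element of any stack $S\in\sigma(x,a)$, for any $x,a$. Stacks are linearly ordered by $S<_\Theta S'$ iff $S$ contains the $\le$-least element of the symmetric difference $(S\setminus S')\cup(S'\setminus S)$. Transitions between boards: (i) $\tau$-successor, for $\tau\colon X\to Y$: first let $\sigma^*(y,a)=\{S\mid S\in\sigma(x,b)\text{ for some }x\in X,b\in A, c\in A \text{ with }(x,c,y)\in\tau\text{ and }a=b\vee c\}$ and let $\Theta^*$ be the set of chips occurring in some stack of $\sigma^*$, with the inherited order. Then choose a finite linearly ordered $\Theta^\circ\subseteq\mathcal{C}\setminus\Theta$ and a bijection $\iota$ from $\{y\in Y\mid\sigma^*(y,\alpha)\neq\emptyset\}$ onto $\Theta^\circ$, and set $\sigma'(y,\alpha)=\emptyset$, $\sigma'(y,0)=\sigma^*(y,0)\cup\{S\cup\{\iota(y)\}\mid S\in\sigma^*(y,\alpha)\}$, $\sigma'(y,a)=\sigma^*(y,a)$ for $a\notin\{0,\alpha\}$, and $\Theta'=\Theta^*\oplus\Theta^\circ$ (all elements of $\Theta^*$ below all elements of $\Theta^\circ$). (ii)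 Thinning: $\sigma'(x,a)=\{\min_{<_\Theta}\sigma(x,a)\}$ if $\sigma(x,a)\neq\emptyset$, else $\emptyset$; $\Theta'$ the chips still occurring. (iii) $\gamma$-reset for a covered $\gamma\in\Theta$: for a stack $S$ let $S{\upharpoonright}\gamma=\{z\in S\mid z\le\gamma\}$ if $\gamma\in S$ and $S{\upharpoonright}\gamma=S$ otherwise; $\sigma'(x,a)=\{S{\upharpoonright}\gamma\mid S\in\sigma(x,a)\}$, $\Theta'$ the chips still occurring. (iv) Population: $\Theta'=\Theta$, $\sigma(x,0)\subseteq\sigma'(x,0)\subseteq\sigma(x,0)\cup\{\emptyset\}$, $\sigma'(x,a)=\sigma(x,a)$ for $a\neq0$. A greedy $\tau$-transition from $(\Theta,\sigma)$ is the sequence: with $\gamma_1<\dots<\gamma_k$ all chips covered in $(\Theta,\sigma)$, perform the resets $R_{\gamma_k},\dots,R_{\gamma_1}$ in this order; then the population replacing every $\sigma(x,0)=\emptyset$ by $\{\emptyset\}$ and changing nothing else; then a $\tau$-successor step; then the thinning. $K$-sparse boards: for $K\ge|X|$ let $\overline{K}=\{n\in\omega\mid n<K\cdot(|A|+1)\}$. A board $(\Theta,\sigma)$ on $X$ is $K$-sparse if $\Theta\subseteq\overline{K}$, $|\Theta|\le K\cdot|A|$, $|\sigma(x,a)|\le1$ for all $(x,a)$, and $\sigma(x,\alpha)=\emptyset$ for all $x$. For $K\ge|X|,|Y|$, every $K$-sparse board $(\Theta,\sigma)$ on $X$ and every $\tau\colon X\to Y$ there exists a greedy $\tau$-transition $(\Theta,\sigma)=(\Theta_0,\sigma_0)\to\dots\to(\Theta_n,\sigma_n)$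 with $(\Theta_n,\sigma_n)$ $K$-sparse and $\Theta_n\cap\Theta_0=\bigcap_{i\le n}\Theta_i$; fix once and for all one such result board and denote it $g_\tau(\Theta,\sigma)$. Safra automaton. Let $K=\max_{X\in O}|X|$. $\mathfrak{S}(\mathcal{A},S,M)$ is the deterministic Rabin word automaton over the alphabet $M$ with state set $Q=\{(X,(\Theta,\sigma))\mid X\in O,\ (\Theta,\sigma)\text{ a }K\text{-sparse board on }X\}$, initial state $(S,(\emptyset,(x,a)\mapsto\emptyset))$, and partial transition function mapping state $(X,(\Theta,\sigma))$ and letter $\tau\colon X\to Y$ to $(Y,g_\tau(\Theta,\sigma))$ (undefined if $\mathrm{dom}(\tau)\neq X$). Its acceptance condition is the set of pairs $(G_\gamma,B_\gamma)$ for $\gamma\in\overline{K}$, where $G_\gamma=\{(X,(\Theta,\sigma))\in Q\mid\gamma\in\Theta,\ \gamma\text{ covered}\}$ and $B_\gamma=\{(X,(\Theta,\sigma))\in Q\mid\gamma\notin\Theta\}$. A word $\tau\in M^\omega$ is accepted iff the (unique) run on $\tau$ exists (is infinite) and for some $\gamma$ it visits $G_\gamma$ infinitely often and $B_\gamma$ only finitely often. *)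

theory Defs
  imports Main "HOL-Library.Countable"
begin

text \<open>Activation algebra: the type 'a of class finite + bounded_semilattice_sup_bot
  (join = sup, 0 = bot), together with a distinguished alpha \<noteq> bot.
  Objects of T_A: finite sets of elements of a type 'x.\<close>

type_synonym ('x,'a) morph = "'x set \<times> ('x \<times> 'a \<times> 'x) set \<times> 'x set"

definition mdom :: "('x,'a) morph \<Rightarrow> 'x set" where "mdom m = fst m"
definition mrel :: "('x,'a) morph \<Rightarrow> ('x \<times> 'a \<times> 'x) set" where "mrel m = fst (snd m)"
definition mcod :: "('x,'a) morph \<Rightarrow> 'x set" where "mcod m = snd (snd m)"

definition is_morph :: "('x,'a) morph \<Rightarrow> bool" where
  "is_morph m \<longleftrightarrow> finite (mdom m) \<and> finite (mcod m) \<and>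
     mrel m \<subseteq> mdom m \<times> (UNIV :: 'a set) \<times> mcod m"

definition rcomp :: "('x \<times> 'a::semilattice_sup \<times> 'x) set \<Rightarrow> ('x \<times> 'a \<times> 'x) set \<Rightarrow> ('x \<times> 'a \<times> 'x) set" where
  "rcomp R R' = {(x, c, z) | x c z. \<exists>y a b. (x, a, y) \<in> R \<and> (y, b, z) \<in> R' \<and> sup a b = c}"

text \<open>Composite along a path: Pp tau n d = P(n < n+d+1) = tau_(n+d) o ... o tau_n.\<close>
fun Pp :: "(nat \<Rightarrow> ('x,'a::semilattice_sup) morph) \<Rightarrow> nat \<Rightarrow> nat \<Rightarrow> ('x \<times> 'a \<times> 'x) set" where
  "Pp \<tau> n 0 = mrel (\<tau> n)"
| "Pp \<tau> n (Suc d) = rcomp (Pp \<tau> n d) (mrel (\<tau> (n + Suc d)))"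

definition Pcomp :: "(nat \<Rightarrow> ('x,'a::semilattice_sup) morph) \<Rightarrow> nat \<Rightarrow> nat \<Rightarrow> ('x \<times> 'a \<times> 'x) set" where
  "Pcomp \<tau> n m = Pp \<tau> n (m - n - 1)"   \<comment> \<open>meaningful for n < m\<close>

definition is_path :: "(nat \<Rightarrow> ('x,'a) morph) \<Rightarrow> bool" where
  "is_path \<tau> \<longleftrightarrow> (\<forall>i. mcod (\<tau> i) = mdom (\<tau> (Suc i)))"

definition trace_cond :: "'a::semilattice_sup \<Rightarrow> (nat \<Rightarrow> ('x,'a) morph) \<Rightarrow> bool" where
  "trace_cond \<alpha> \<tau> \<longleftrightarrow> (\<exists>k :: nat \<Rightarrow> nat. \<exists>s :: nat \<Rightarrow> 'x. strict_mono k \<and>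
      (\<forall>i. s i \<in> mdom (\<tau> (k i)) \<and> (s i, \<alpha>, s (Suc i)) \<in> Pcomp \<tau> (k i) (k (Suc i))))"

text \<open>The control Theta with its linear order is a distinct list of chips
  (earlier position = smaller). sigma is a function 'x \<Rightarrow> 'a \<Rightarrow> 'c set set,
  required to be empty outside the object X.\<close>

type_synonym ('c,'x,'a) board = "'c list \<times> ('x \<Rightarrow> 'a \<Rightarrow> 'c set set)"

definition chip_le :: "'c list \<Rightarrow> 'c \<Rightarrow> 'c \<Rightarrow> bool" where
  "chip_le \<Theta> a b \<longleftrightarrow> (\<exists>i j. i \<le> j \<and> j < length \<Theta> \<and> \<Theta> ! i = a \<and> \<Theta> ! j = b)"

definition occ :: "('x \<Rightarrow> 'a \<Rightarrow> 'c set set) \<Rightarrow> 'c \<Rightarrow> bool" where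
  "occ \<sigma> \<gamma> \<longleftrightarrow> (\<exists>x a S. S \<in> \<sigma> x a \<and> \<gamma> \<in> S)"

definition is_board :: "'x set \<Rightarrow> ('c,'x,'a) board \<Rightarrow> bool" where
  "is_board X b \<longleftrightarrow> distinct (fst b) \<and> (\<forall>x a. x \<notin> X \<longrightarrow> snd b x a = {}) \<and>
     (\<forall>x a S. S \<in> snd b x a \<longrightarrow> S \<subseteq> set (fst b)) \<and> (\<forall>\<gamma>\<in>set (fst b). occ (snd b) \<gamma>)"

definition is_top :: "'c list \<Rightarrow> 'c set \<Rightarrow> 'c \<Rightarrow> bool" where
  "is_top \<Theta> S \<gamma> \<longleftrightarrow> \<gamma> \<in> S \<and> (\<forall>z\<in>S. chip_le \<Theta> z \<gamma>)"

definition covered :: "('c,'x,'a) board \<Rightarrow> 'c \<Rightarrow> bool" where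
  "covered b \<gamma> \<longleftrightarrow> \<gamma> \<in> set (fst b) \<and> \<not> (\<exists>x a S. S \<in> snd b x a \<and> is_top (fst b) S \<gamma>)"

definition stack_less :: "'c list \<Rightarrow> 'c set \<Rightarrow> 'c set \<Rightarrow> bool" where
  "stack_less \<Theta> S S' \<longleftrightarrow> S \<noteq> S' \<and>
     (\<exists>d \<in> (S - S') \<union> (S' - S). d \<in> S \<and> (\<forall>e \<in> (S - S') \<union> (S' - S). chip_le \<Theta> d e))"

definition stack_min :: "'c list \<Rightarrow> 'c set set \<Rightarrow> 'c set" where
  "stack_min \<Theta> F = (THE S. S \<in> F \<and> (\<forall>S'\<in>F. S' \<noteq> S \<longrightarrow> stack_less \<Theta> S S'))"

definition thin :: "('c,'x,'a) board \<Rightarrow> ('c,'x,'a) board" where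
  "thin b = (let \<sigma>' = (\<lambda>x a. if snd b x a = {} then {} else {stack_min (fst b) (snd b x a)})
             in (filter (occ \<sigma>') (fst b), \<sigma>'))"

definition truncate :: "'c list \<Rightarrow> 'c \<Rightarrow> 'c set \<Rightarrow> 'c set" where
  "truncate \<Theta> \<gamma> S = (if \<gamma> \<in> S then {z \<in> S. chip_le \<Theta> z \<gamma>} else S)"

definition reset :: "'c \<Rightarrow> ('c,'x,'a) board \<Rightarrow> ('c,'x,'a) board" where
  "reset \<gamma> b = (let \<sigma>' = (\<lambda>x a. truncate (fst b) \<gamma> ` snd b x a)
                in (filter (occ \<sigma>') (fst b), \<sigma>'))"

definition populate :: "'x set \<Rightarrow> ('c,'x,'a::bot) board \<Rightarrow> ('c,'x,'a) board" where
  "populate X b = (fst b, \<lambda>x a. if a = bot \<and> x \<in> X \<and> snd b x a = {} then {{}} else snd b x a)"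

text \<open>(i) tau-successor, with the choice of fresh chips Theta_o (a distinct list, giving
  the order) and bijection iota.\<close>
definition sstar :: "('x \<times> 'a::semilattice_sup \<times> 'x) set \<Rightarrow> ('x \<Rightarrow> 'a \<Rightarrow> 'c set set) \<Rightarrow> 'x \<Rightarrow> 'a \<Rightarrow> 'c set set" where
  "sstar R \<sigma> y a = {S. \<exists>x b c. S \<in> \<sigma> x b \<and> (x, c, y) \<in> R \<and> a = sup b c}"

definition succ_ok :: "'a::semilattice_sup \<Rightarrow> ('x,'a) morph \<Rightarrow> ('c,'x,'a) board \<Rightarrow> 'c list \<Rightarrow> ('x \<Rightarrow> 'c) \<Rightarrow> bool" where
  "succ_ok \<alpha> m b \<Theta>o \<iota> \<longleftrightarrow> distinct \<Theta>o \<and> set \<Theta>o \<inter> set (fst b) = {} \<and>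
     bij_betw \<iota> {y \<in> mcod m. sstar (mrel m) (snd b) y \<alpha> \<noteq> {}} (set \<Theta>o)"

definition succ :: "'a::{semilattice_sup,bot} \<Rightarrow> ('x,'a) morph \<Rightarrow> ('c,'x,'a) board \<Rightarrow> 'c list \<Rightarrow> ('x \<Rightarrow> 'c) \<Rightarrow> ('c,'x,'a) board" where
  "succ \<alpha> m b \<Theta>o \<iota> = (let ss = sstar (mrel m) (snd b) in
     (filter (occ ss) (fst b) @ \<Theta>o,
      \<lambda>y a. if a = \<alpha> then {}
            else if a = bot then ss y bot \<union> {insert (\<iota> y) S | S. S \<in> ss y \<alpha>}
            else ss y a))"

fun resets :: "'c list \<Rightarrow> ('c,'x,'a) board \<Rightarrow> ('c,'x,'a) board list" where
  "resets [] b = [b]"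
| "resets (\<gamma> # \<gamma>s) b = b # resets \<gamma>s (reset \<gamma> b)"

definition Kbar :: "(nat \<Rightarrow> 'c) \<Rightarrow> nat \<Rightarrow> nat \<Rightarrow> 'c set" where
  "Kbar ch K N = ch ` {n. n < K * (N + 1)}"   \<comment> \<open>N = |A|\<close>

definition ksparse :: "'a::finite \<Rightarrow> (nat \<Rightarrow> 'c) \<Rightarrow> nat \<Rightarrow> 'x set \<Rightarrow> ('c,'x,'a) board \<Rightarrow> bool" where
  "ksparse \<alpha> ch K X b \<longleftrightarrow> is_board X b \<and> set (fst b) \<subseteq> Kbar ch K (card (UNIV :: 'a set)) \<and>
     length (fst b) \<le> K * card (UNIV :: 'a set) \<and> (\<forall>x a. card (snd b x a) \<le> 1) \<and> (\<forall>x. snd b x \<alpha> = {})"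

definition greedy_result :: "'a::{finite,bounded_semilattice_sup_bot} \<Rightarrow> (nat \<Rightarrow> 'c) \<Rightarrow> nat \<Rightarrow> ('x,'a) morph
    \<Rightarrow> ('c,'x,'a) board \<Rightarrow> ('c,'x,'a) board \<Rightarrow> bool" where
  "greedy_result \<alpha> ch K m b b' \<longleftrightarrow> (\<exists>\<Theta>o \<iota>.
     let rs = resets (rev (filter (covered b) (fst b))) b;
         b2 = populate (mdom m) (last rs);
         b3 = succ \<alpha> m b2 \<Theta>o \<iota>;
         b4 = thin b3
     in succ_ok \<alpha> m b2 \<Theta>o \<iota> \<and> b' = b4 \<and> ksparse \<alpha> ch K (mcod m) b4 \<and>
        set (fst b4) \<inter> set (fst b) = (\<Inter>bb \<in> set (rs @ [b2, b3, b4]). set (fst bb)))"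

definition safraK :: "'x set set \<Rightarrow> nat" where
  "safraK Ob = Max (card ` Ob)"

definition safra_choice :: "'a::{finite,bounded_semilattice_sup_bot} \<Rightarrow> (nat \<Rightarrow> 'c) \<Rightarrow> 'x set set
    \<Rightarrow> ('x,'a) morph set \<Rightarrow> (('x,'a) morph \<Rightarrow> ('c,'x,'a) board \<Rightarrow> ('c,'x,'a) board) \<Rightarrow> bool" where
  "safra_choice \<alpha> ch Ob M g \<longleftrightarrow> (\<forall>m\<in>M. \<forall>b. ksparse \<alpha> ch (safraK Ob) (mdom m) b \<longrightarrow>
      greedy_result \<alpha> ch (safraK Ob) m b (g m b))"

fun safra_run :: "'x set \<Rightarrow> (('x,'a) morph \<Rightarrow> ('c,'x,'a) board \<Rightarrow> ('c,'x,'a) board)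
    \<Rightarrow> (nat \<Rightarrow> ('x,'a) morph) \<Rightarrow> nat \<Rightarrow> 'x set \<times> ('c,'x,'a) board" where
  "safra_run S g \<tau> 0 = (S, ([], \<lambda>x a. {}))"
| "safra_run S g \<tau> (Suc n) = (mcod (\<tau> n), g (\<tau> n) (snd (safra_run S g \<tau> n)))"

definition safra_accepts :: "'a::{finite,bounded_semilattice_sup_bot} \<Rightarrow> (nat \<Rightarrow> 'c) \<Rightarrow> 'x set set \<Rightarrow> 'x set
    \<Rightarrow> (('x,'a) morph \<Rightarrow> ('c,'x,'a) board \<Rightarrow> ('c,'x,'a) board) \<Rightarrow> (nat \<Rightarrow> ('x,'a) morph) \<Rightarrow> bool" where
  "safra_accepts \<alpha> ch Ob S g \<tau> \<longleftrightarrow>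
     (\<forall>n. mdom (\<tau> n) = fst (safra_run S g \<tau> n)) \<and>
     (\<exists>\<gamma> \<in> Kbar ch (safraK Ob) (card (UNIV :: 'a set)).
        infinite {n. covered (snd (safra_run S g \<tau> n)) \<gamma>} \<and>
        finite {n. \<gamma> \<notin> set (fst (snd (safra_run S g \<tau> n)))})"

end

theory Submission
  imports Defs
begin


lemma cle_split: "chip_le \<Theta> a b \<longleftrightarrow> (\<exists>us vs. \<Theta> = us @ a # vs \<and> b \<in> set (a # vs))"
proof
  assume "chip_le \<Theta> a b"
  then obtain i j where ij: "i \<le> j" "j < length \<Theta>" "\<Theta> ! i = a" "\<Theta> ! j = b"
    unfolding chip_le_def by blast
  have i: "i < length \<Theta>" using ij by simp
  have d: "drop i \<Theta> = a # drop (Suc i) \<Theta>" using i ij(3) by (metis Cons_nth_drop_Suc)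
  have "\<Theta> = take i \<Theta> @ a # drop (Suc i) \<Theta>" using d by (metis append_take_drop_id)
  moreover have "b \<in> set (drop i \<Theta>)"
  proof -
    have "drop i \<Theta> ! (j - i) = b" using ij i by simp
    moreover have "j - i < length (drop i \<Theta>)" using ij by simp
    ultimately show ?thesis by (metis nth_mem)
  qed
  moreover note d
  ultimately show "\<exists>us vs. \<Theta> = us @ a # vs \<and> b \<in> set (a # vs)" by metis
next
  assume "\<exists>us vs. \<Theta> = us @ a # vs \<and> b \<in> set (a # vs)"
  then obtain us vs where h: "\<Theta> = us @ a # vs" "b \<in> set (a # vs)" by blast
  then obtain k where k: "k < length (a # vs)" "(a # vs) ! k = b" by (meson in_set_conv_nth)
  show "chip_le \<Theta> a b" unfolding chip_le_def
    apply (rule exI[of _ "length us"], rule exI[of _ "length us + k"])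
    using h k by (auto simp: nth_append)
qed

lemma cle_mem: "chip_le \<Theta> a b \<Longrightarrow> a \<in> set \<Theta> \<and> b \<in> set \<Theta>"
  unfolding cle_split by auto

lemma cle_refl: "a \<in> set \<Theta> \<Longrightarrow> chip_le \<Theta> a a"
  unfolding cle_split by (meson list.set_intros(1) split_list)

lemma cle_antisym: "distinct \<Theta> \<Longrightarrow> chip_le \<Theta> a b \<Longrightarrow> chip_le \<Theta> b a \<Longrightarrow> a = b"
proof -
  assume d: "distinct \<Theta>" and h1: "chip_le \<Theta> a b" and h2: "chip_le \<Theta> b a"
  obtain i j where ij: "i \<le> j" "j < length \<Theta>" "\<Theta> ! i = a" "\<Theta> ! j = b"
    using h1 unfolding chip_le_def by blast
  obtain i' j' where ij': "i' \<le> j'" "j' < length \<Theta>" "\<Theta> ! i' = b" "\<Theta> ! j' = a"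
    using h2 unfolding chip_le_def by blast
  have "j = i'" using nth_eq_iff_index_eq[OF d, of j i'] ij ij' by simp
  moreover have "j' = i" using nth_eq_iff_index_eq[OF d, of j' i] ij ij' by simp
  ultimately have "i = j" using ij ij' by simp
  then show "a = b" using ij by simp
qed

lemma cle_trans: "distinct \<Theta> \<Longrightarrow> chip_le \<Theta> a b \<Longrightarrow> chip_le \<Theta> b c \<Longrightarrow> chip_le \<Theta> a c"
proof -
  assume d: "distinct \<Theta>" and h1: "chip_le \<Theta> a b" and h2: "chip_le \<Theta> b c"
  obtain i j where ij: "i \<le> j" "j < length \<Theta>" "\<Theta> ! i = a" "\<Theta> ! j = b"
    using h1 unfolding chip_le_def by blast
  obtain i' j' where ij': "i' \<le> j'" "j' < length \<Theta>" "\<Theta> ! i' = b" "\<Theta> ! j' = c"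
    using h2 unfolding chip_le_def by blast
  have "j = i'" using nth_eq_iff_index_eq[OF d, of j i'] ij ij' by simp
  then show ?thesis unfolding chip_le_def using ij ij' by (intro exI[of _ i] exI[of _ j']) auto
qed

lemma cle_total: "a \<in> set \<Theta> \<Longrightarrow> b \<in> set \<Theta> \<Longrightarrow> chip_le \<Theta> a b \<or> chip_le \<Theta> b a"
proof -
  assume "a \<in> set \<Theta>" "b \<in> set \<Theta>"
  then obtain i j where "i < length \<Theta>" "\<Theta> ! i = a" "j < length \<Theta>" "\<Theta> ! j = b"
    by (meson in_set_conv_nth)
  then show ?thesis unfolding chip_le_def by (cases "i \<le> j") (blast, force)
qed

lemma cle_transfer:
  assumes "distinct \<Theta>'" "a \<in> set \<Theta>" "b \<in> set \<Theta>"
    and mono: "\<And>x y. x \<in> {a,b} \<Longrightarrow> y \<in> {a,b} \<Longrightarrow> chip_le \<Theta> x y \<Longrightarrow> chip_le \<Theta>' x y"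
  shows "chip_le \<Theta>' a b \<longleftrightarrow> chip_le \<Theta> a b"
proof
  assume h: "chip_le \<Theta>' a b"
  show "chip_le \<Theta> a b"
  proof (cases "chip_le \<Theta> a b")
    case False
    then have "chip_le \<Theta> b a" using cle_total assms by metis
    then have "chip_le \<Theta>' b a" using mono by auto
    then have "a = b" using h cle_antisym assms by metis
    then show ?thesis using cle_refl assms by metis
  qed
qed (use mono in auto)

lemma cle_filter:
  assumes "distinct \<Theta>" "P a" "P b"
  shows "chip_le (filter P \<Theta>) a b \<longleftrightarrow> chip_le \<Theta> a b"
proof (cases "a \<in> set \<Theta> \<and> b \<in> set \<Theta>")
  case True
  show ?thesis
  proof (rule cle_transfer)
    fix x y assume xy: "x \<in> {a,b}" "y \<in> {a,b}" "chip_le \<Theta> x y"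
    then obtain us vs where "\<Theta> = us @ x # vs" "y \<in> set (x # vs)" unfolding cle_split by blast
    moreover have "P x" "P y" using xy assms by auto
    ultimately show "chip_le (filter P \<Theta>) x y" unfolding cle_split
      by (rule_tac x="filter P us" in exI, rule_tac x="filter P vs" in exI) auto
  qed (use True assms in auto)
next
  case False
  then show ?thesis using cle_mem by (metis filter_is_subset subsetD)
qed

lemma cle_append1:
  assumes "distinct (\<Theta> @ \<Theta>2)" "a \<in> set \<Theta>" "b \<in> set \<Theta>"
  shows "chip_le (\<Theta> @ \<Theta>2) a b \<longleftrightarrow> chip_le \<Theta> a b"
proof (rule cle_transfer)
  fix x y assume "chip_le \<Theta> x y"
  then obtain us vs where "\<Theta> = us @ x # vs" "y \<in> set (x # vs)" unfolding cle_split by blast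
  then show "chip_le (\<Theta> @ \<Theta>2) x y" unfolding cle_split
    by (rule_tac x="us" in exI, rule_tac x="vs @ \<Theta>2" in exI) auto
qed (use assms in auto)

lemma cle_append2:
  assumes "a \<in> set \<Theta>" "b \<in> set \<Theta>2"
  shows "chip_le (\<Theta> @ \<Theta>2) a b"
proof -
  obtain us vs where "\<Theta> = us @ a # vs" using assms by (meson split_list)
  then show ?thesis unfolding cle_split
    by (rule_tac x="us" in exI, rule_tac x="vs @ \<Theta>2" in exI) (use assms in auto)
qed

lemma cle_append3:
  assumes "distinct (\<Theta> @ \<Theta>2)" "a \<in> set \<Theta>2" "b \<in> set \<Theta>"
  shows "\<not> chip_le (\<Theta> @ \<Theta>2) a b"
proof
  assume "chip_le (\<Theta> @ \<Theta>2) a b"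
  moreover have "chip_le (\<Theta> @ \<Theta>2) b a" using cle_append2 assms by metis
  ultimately have "a = b" using cle_antisym assms by metis
  then show False using assms by auto
qed

lemma least_exists:
  assumes "finite D" "D \<noteq> {}" "D \<subseteq> set \<Theta>" "distinct \<Theta>"
  shows "\<exists>d\<in>D. \<forall>e\<in>D. chip_le \<Theta> d e"
  using assms
proof (induction D rule: finite_ne_induct)
  case (singleton x) then show ?case using cle_refl by auto
next
  case (insert x F)
  then obtain d where d: "d \<in> F" "\<forall>e\<in>F. chip_le \<Theta> d e" by auto
  show ?case
  proof (cases "chip_le \<Theta> x d")
    case True
    have xm: "x \<in> set \<Theta>" using insert by auto
    have "\<forall>e\<in>insert x F. chip_le \<Theta> x e"
    proof
      fix e assume "e \<in> insert x F"
      then show "chip_le \<Theta> x e"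
      proof
        assume "e = x" then show ?thesis using cle_refl xm by simp
      next
        assume "e \<in> F" then show ?thesis using d True cle_trans[OF assms(4)] by blast
      qed
    qed
    then show ?thesis by blast
  next
    case False
    then have "chip_le \<Theta> d x" using cle_total insert d by (meson insert_subset subsetD)
    then show ?thesis using d by auto
  qed
qed

lemma sl_asym:
  assumes "distinct \<Theta>" "stack_less \<Theta> S S'" shows "\<not> stack_less \<Theta> S' S"
proof
  assume "stack_less \<Theta> S' S"
  then obtain d' where d': "d' \<in> (S' - S) \<union> (S - S')" "d' \<in> S'"
     "\<forall>e \<in> (S' - S) \<union> (S - S'). chip_le \<Theta> d' e" unfolding stack_less_def by blast
  obtain d where d: "d \<in> (S - S') \<union> (S' - S)" "d \<in> S"
     "\<forall>e \<in> (S - S') \<union> (S' - S). chip_le \<Theta> d e" using assms unfolding stack_less_def by blast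
  have "chip_le \<Theta> d d'" using d d' by blast
  moreover have "chip_le \<Theta> d' d" using d d' by blast
  ultimately have "d = d'" using cle_antisym[OF assms(1)] by blast
  then show False using d d' by auto
qed

lemma sl_total:
  assumes "distinct \<Theta>" "S \<subseteq> set \<Theta>" "S' \<subseteq> set \<Theta>" "S \<noteq> S'"
  shows "stack_less \<Theta> S S' \<or> stack_less \<Theta> S' S"
proof -
  let ?D = "(S - S') \<union> (S' - S)"
  have D3: "?D \<subseteq> set \<Theta>" using assms by blast
  have D1: "finite ?D" using D3 finite_subset by blast
  have D2: "?D \<noteq> {}" using assms(4) by blast
  obtain d where "d \<in> ?D" "\<forall>e\<in>?D. chip_le \<Theta> d e" using least_exists[OF D1 D2 D3 assms(1)] by blast
  then have dd: "d \<in> ?D" "\<forall>e\<in>?D. chip_le \<Theta> d e" by auto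
  have sym: "(S' - S) \<union> (S - S') = ?D" by blast
  show ?thesis
  proof (cases "d \<in> S")
    case True
    then have "stack_less \<Theta> S S'" unfolding stack_less_def using assms(4) dd by blast
    then show ?thesis by blast
  next
    case False
    then have "d \<in> S'" using dd by blast
    then have "stack_less \<Theta> S' S" unfolding stack_less_def sym using assms(4) dd by blast
    then show ?thesis by blast
  qed
qed

lemma sl_trans:
  assumes "distinct \<Theta>" "S1 \<subseteq> set \<Theta>" "S3 \<subseteq> set \<Theta>" "stack_less \<Theta> S1 S2" "stack_less \<Theta> S2 S3"
  shows "stack_less \<Theta> S1 S3"
proof -
  obtain d1 where d1: "d1 \<in> (S1 - S2) \<union> (S2 - S1)" "d1 \<in> S1"
     "\<forall>e \<in> (S1 - S2) \<union> (S2 - S1). chip_le \<Theta> d1 e" using assms(4) unfolding stack_less_def by blast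
  obtain d2 where d2: "d2 \<in> (S2 - S3) \<union> (S3 - S2)" "d2 \<in> S2"
     "\<forall>e \<in> (S2 - S3) \<union> (S3 - S2). chip_le \<Theta> d2 e" using assms(5) unfolding stack_less_def by blast
  have m1: "d1 \<in> set \<Theta>" using d1(2) assms(2) by blast
  have "chip_le \<Theta> d2 d2" using bspec[OF d2(3) d2(1)] .
  then have m2: "d2 \<in> set \<Theta>" using cle_mem by metis
  have below1: "z \<in> S1 \<longleftrightarrow> z \<in> S2" if "chip_le \<Theta> z d1" "z \<noteq> d1" for z
  proof (rule ccontr)
    assume "\<not> (z \<in> S1 \<longleftrightarrow> z \<in> S2)"
    then have "chip_le \<Theta> d1 z" using d1 by blast
    then show False using cle_antisym[OF assms(1)] that by blast
  qed
  have below2: "z \<in> S2 \<longleftrightarrow> z \<in> S3" if "chip_le \<Theta> z d2" "z \<noteq> d2" for z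
  proof (rule ccontr)
    assume "\<not> (z \<in> S2 \<longleftrightarrow> z \<in> S3)"
    then have "chip_le \<Theta> d2 z" using d2 by blast
    then show False using cle_antisym[OF assms(1)] that by blast
  qed
  have ne: "d1 \<noteq> d2" using d1(1,2) d2(2) by blast
  consider "chip_le \<Theta> d1 d2" | "chip_le \<Theta> d2 d1" using cle_total[OF m1 m2] by blast
  then show ?thesis
  proof cases
    case 1
    have "d1 \<notin> S2" using d1(1,2) by blast
    then have "d1 \<notin> S3" using below2[OF 1 ne] by blast
    have least: "\<forall>e \<in> (S1 - S3) \<union> (S3 - S1). chip_le \<Theta> d1 e"
    proof
      fix e assume e: "e \<in> (S1 - S3) \<union> (S3 - S1)"
      show "chip_le \<Theta> d1 e"
      proof (rule ccontr)
        assume n: "\<not> chip_le \<Theta> d1 e"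
        have em: "e \<in> set \<Theta>" using e assms(2,3) by blast
        have "chip_le \<Theta> e d1" using n cle_total[OF em m1] by simp
        then have ed2: "chip_le \<Theta> e d2" using cle_trans[OF assms(1) _ 1] by simp
        have "e \<noteq> d1" using n cle_refl[OF m1] by auto
        have "e \<noteq> d2" using n 1 by auto
        have "e \<in> S1 \<longleftrightarrow> e \<in> S2" using below1[OF \<open>chip_le \<Theta> e d1\<close> \<open>e \<noteq> d1\<close>] .
        moreover have "e \<in> S2 \<longleftrightarrow> e \<in> S3" using below2[OF ed2 \<open>e \<noteq> d2\<close>] .
        ultimately show False using e by blast
      qed
    qed
    have dd: "d1 \<in> (S1 - S3) \<union> (S3 - S1)" using d1(2) \<open>d1 \<notin> S3\<close> by simp
    have ne13: "S1 \<noteq> S3" using d1(2) \<open>d1 \<notin> S3\<close> by auto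
    show ?thesis unfolding stack_less_def
      by (intro conjI bexI[of _ d1]) (rule ne13, rule d1(2), rule least, rule dd)
  next
    case 2
    have "d2 \<in> S1" using below1[OF 2 ne[symmetric]] d2(2) by blast
    have "d2 \<notin> S3" using d2(1,2) by blast
    have least: "\<forall>e \<in> (S1 - S3) \<union> (S3 - S1). chip_le \<Theta> d2 e"
    proof
      fix e assume e: "e \<in> (S1 - S3) \<union> (S3 - S1)"
      show "chip_le \<Theta> d2 e"
      proof (rule ccontr)
        assume n: "\<not> chip_le \<Theta> d2 e"
        have em: "e \<in> set \<Theta>" using e assms(2,3) by blast
        have "chip_le \<Theta> e d2" using n cle_total[OF em m2] by simp
        then have ed1: "chip_le \<Theta> e d1" using cle_trans[OF assms(1) _ 2] by simp
        have "e \<noteq> d2" using n cle_refl[OF m2] by auto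
        have "e \<noteq> d1" using n 2 by auto
        have "e \<in> S1 \<longleftrightarrow> e \<in> S2" using below1[OF ed1 \<open>e \<noteq> d1\<close>] .
        moreover have "e \<in> S2 \<longleftrightarrow> e \<in> S3" using below2[OF \<open>chip_le \<Theta> e d2\<close> \<open>e \<noteq> d2\<close>] .
        ultimately show False using e by blast
      qed
    qed
    have dd: "d2 \<in> (S1 - S3) \<union> (S3 - S1)" using \<open>d2 \<in> S1\<close> \<open>d2 \<notin> S3\<close> by simp
    have ne13: "S1 \<noteq> S3" using \<open>d2 \<in> S1\<close> \<open>d2 \<notin> S3\<close> by auto
    show ?thesis unfolding stack_less_def
      by (intro conjI bexI[of _ d2]) (rule ne13, rule \<open>d2 \<in> S1\<close>, rule least, rule dd)
  qed
qed

lemma stack_min_prop: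
  assumes "finite F" "F \<noteq> {}" "\<forall>S\<in>F. S \<subseteq> set \<Theta>" "distinct \<Theta>"
  shows "stack_min \<Theta> F \<in> F \<and> (\<forall>S'\<in>F. S' \<noteq> stack_min \<Theta> F \<longrightarrow> stack_less \<Theta> (stack_min \<Theta> F) S')"
proof -
  have "\<exists>S\<in>F. \<forall>S'\<in>F. S' \<noteq> S \<longrightarrow> stack_less \<Theta> S S'"
    using assms
  proof (induction F rule: finite_ne_induct)
    case (singleton x) then show ?case by auto
  next
    case (insert x F)
    have sub: "\<forall>S\<in>insert x F. S \<subseteq> set \<Theta>" using insert.prems(1) .
    obtain S where S: "S \<in> F" "\<forall>S'\<in>F. S' \<noteq> S \<longrightarrow> stack_less \<Theta> S S'"
      using insert.IH sub assms(4) by blast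
    have xS: "x \<noteq> S" using insert.hyps S by auto
    show ?case
    proof (cases "stack_less \<Theta> x S")
      case True
      have "\<forall>S'\<in>insert x F. S' \<noteq> x \<longrightarrow> stack_less \<Theta> x S'"
      proof (intro ballI impI)
        fix S' assume S': "S' \<in> insert x F" "S' \<noteq> x"
        show "stack_less \<Theta> x S'"
        proof (cases "S' = S")
          case False
          then have "stack_less \<Theta> S S'" using S S' by auto
          moreover have "x \<subseteq> set \<Theta>" "S' \<subseteq> set \<Theta>" using sub S' by auto
          ultimately show ?thesis using sl_trans[of \<Theta> x S' S] True assms(4) by blast
        qed (use True in auto)
      qed
      then show ?thesis by blast
    next
      case False
      moreover have "S \<subseteq> set \<Theta>" "x \<subseteq> set \<Theta>" using sub S by auto
      ultimately have Sx: "stack_less \<Theta> S x" using sl_total[of \<Theta> S x] assms(4) xS by blast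
      have "\<forall>S'\<in>insert x F. S' \<noteq> S \<longrightarrow> stack_less \<Theta> S S'"
        using S(2) Sx by blast
      then show ?thesis using S(1) by blast
    qed
  qed
  then obtain S where S: "S \<in> F" "\<forall>S'\<in>F. S' \<noteq> S \<longrightarrow> stack_less \<Theta> S S'" by blast
  have "stack_min \<Theta> F = S" unfolding stack_min_def
  proof (rule the_equality)
    fix T assume T: "T \<in> F \<and> (\<forall>S'\<in>F. S' \<noteq> T \<longrightarrow> stack_less \<Theta> T S')"
    show "T = S"
    proof (rule ccontr)
      assume "T \<noteq> S"
      then have "stack_less \<Theta> T S" "stack_less \<Theta> S T" using S T by auto
      then show False using sl_asym[OF assms(4)] by blast
    qed
  qed (use S in auto)
  then show ?thesis using S by simp
qed


definition trunc_all :: "'c list \<Rightarrow> 'c list \<Rightarrow> 'c set \<Rightarrow> 'c set" where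
  "trunc_all \<Theta> cs S = fold (truncate \<Theta>) cs S"

lemma truncate_sub: "truncate \<Theta> \<gamma> S \<subseteq> S" unfolding truncate_def by auto

lemma trunc_all_Nil[simp]: "trunc_all \<Theta> [] S = S" unfolding trunc_all_def by simp

lemma trunc_all_Cons: "trunc_all \<Theta> (\<gamma>#cs) S = trunc_all \<Theta> cs (truncate \<Theta> \<gamma> S)"
  unfolding trunc_all_def by simp

lemma trunc_all_sub: "trunc_all \<Theta> cs S \<subseteq> S"
proof (induction cs arbitrary: S)
  case (Cons \<gamma> cs)
  then show ?case unfolding trunc_all_Cons using truncate_sub by (metis subset_trans)
qed simp

lemma trunc_all_keep:
  "C \<subseteq> S \<Longrightarrow> (\<forall>\<epsilon>\<in>set cs. \<epsilon> \<in> S \<longrightarrow> (\<forall>c\<in>C. chip_le \<Theta> c \<epsilon>)) \<Longrightarrow> C \<subseteq> trunc_all \<Theta> cs S"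
proof (induction cs arbitrary: S)
  case (Cons \<epsilon> cs)
  have 1: "C \<subseteq> truncate \<Theta> \<epsilon> S"
  proof (cases "\<epsilon> \<in> S")
    case True
    then have "\<forall>c\<in>C. chip_le \<Theta> c \<epsilon>" using Cons.prems(2) by simp
    then show ?thesis using Cons.prems(1) True unfolding truncate_def by auto
  next
    case False
    then show ?thesis using Cons.prems(1) unfolding truncate_def by auto
  qed
  have 2: "\<forall>\<epsilon>'\<in>set cs. \<epsilon>' \<in> truncate \<Theta> \<epsilon> S \<longrightarrow> (\<forall>c\<in>C. chip_le \<Theta> c \<epsilon>')"
    using Cons.prems(2) truncate_sub by (metis list.set_intros(2) subsetD)
  show ?case unfolding trunc_all_Cons using Cons.IH[OF 1 2] .
qed simp

lemma trunc_all_top: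
  "\<gamma> \<in> set cs \<Longrightarrow> \<gamma> \<in> trunc_all \<Theta> cs S \<Longrightarrow> z \<in> trunc_all \<Theta> cs S \<Longrightarrow> chip_le \<Theta> z \<gamma>"
proof (induction cs arbitrary: S)
  case (Cons \<epsilon> cs)
  show ?case
  proof (cases "\<gamma> = \<epsilon>")
    case True
    have s: "trunc_all \<Theta> cs (truncate \<Theta> \<gamma> S) \<subseteq> truncate \<Theta> \<gamma> S" by (rule trunc_all_sub)
    have g: "\<gamma> \<in> truncate \<Theta> \<gamma> S" using Cons.prems(2) s True unfolding trunc_all_Cons by blast
    then have "\<gamma> \<in> S" using truncate_sub[of \<Theta> \<gamma> S] by blast
    moreover have "z \<in> truncate \<Theta> \<gamma> S" using Cons.prems(3) s True unfolding trunc_all_Cons by blast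
    ultimately show ?thesis unfolding truncate_def by simp
  next
    case False
    then have "\<gamma> \<in> set cs" using Cons.prems(1) by simp
    then show ?thesis using Cons.IH Cons.prems(2,3) unfolding trunc_all_Cons by blast
  qed
qed simp

definition bd :: "'c list \<Rightarrow> ('x \<Rightarrow> 'a \<Rightarrow> 'c set set) \<Rightarrow> ('c,'x,'a) board" where
  "bd \<Theta> \<sigma> = (filter (occ \<sigma>) \<Theta>, \<sigma>)"

lemma truncate_filter:
  assumes "distinct \<Theta>" "S \<subseteq> set (filter P \<Theta>)"
  shows "truncate (filter P \<Theta>) \<gamma> S = truncate \<Theta> \<gamma> S"
proof (cases "\<gamma> \<in> S")
  case True
  then have "P \<gamma>" using assms(2) by auto
  have "{z \<in> S. chip_le (filter P \<Theta>) z \<gamma>} = {z \<in> S. chip_le \<Theta> z \<gamma>}"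
  proof (rule Collect_cong)
    fix z
    show "(z \<in> S \<and> chip_le (filter P \<Theta>) z \<gamma>) = (z \<in> S \<and> chip_le \<Theta> z \<gamma>)"
    proof (cases "z \<in> S")
      case True
      then have "P z" using assms(2) by auto
      then show ?thesis using cle_filter[OF assms(1) \<open>P z\<close> \<open>P \<gamma>\<close>] by simp
    qed simp
  qed
  then show ?thesis unfolding truncate_def using True by simp
qed (simp add: truncate_def)

lemma occ_img:
  assumes "occ (\<lambda>x a. f ` \<sigma> x a) z" "\<And>S. f S \<subseteq> S"
  shows "occ \<sigma> z"
  using assms unfolding occ_def by blast

lemma reset_bd:
  assumes "distinct \<Theta>" "\<And>x a S. S \<in> \<sigma> x a \<Longrightarrow> S \<subseteq> set \<Theta>"
  shows "reset \<gamma> (bd \<Theta> \<sigma>) = bd \<Theta> (\<lambda>x a. truncate \<Theta> \<gamma> ` \<sigma> x a)"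
proof -
  have e: "(\<lambda>x a. truncate (filter (occ \<sigma>) \<Theta>) \<gamma> ` \<sigma> x a) = (\<lambda>x a. truncate \<Theta> \<gamma> ` \<sigma> x a)"
  proof (intro ext image_cong refl)
    fix x a S assume S: "S \<in> \<sigma> x a"
    have "S \<subseteq> set (filter (occ \<sigma>) \<Theta>)"
    proof
      fix z assume "z \<in> S"
      then have "occ \<sigma> z" "z \<in> set \<Theta>" using S assms(2) unfolding occ_def by blast+
      then show "z \<in> set (filter (occ \<sigma>) \<Theta>)" by simp
    qed
    then show "truncate (filter (occ \<sigma>) \<Theta>) \<gamma> S = truncate \<Theta> \<gamma> S"
      using truncate_filter[OF assms(1)] by blast
  qed
  have f: "filter (occ (\<lambda>x a. truncate \<Theta> \<gamma> ` \<sigma> x a)) (filter (occ \<sigma>) \<Theta>)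
         = filter (occ (\<lambda>x a. truncate \<Theta> \<gamma> ` \<sigma> x a)) \<Theta>"
    unfolding filter_filter
  proof (rule filter_cong[OF refl])
    fix z
    have "occ (\<lambda>x a. truncate \<Theta> \<gamma> ` \<sigma> x a) z \<Longrightarrow> occ \<sigma> z"
      by (rule occ_img[where f="truncate \<Theta> \<gamma>", OF _ truncate_sub])
    then show "(occ \<sigma> z \<and> occ (\<lambda>x a. truncate \<Theta> \<gamma> ` \<sigma> x a) z) = occ (\<lambda>x a. truncate \<Theta> \<gamma> ` \<sigma> x a) z"
      by blast
  qed
  show ?thesis unfolding reset_def bd_def Let_def using e f by simp
qed

lemma resets_ne: "resets cs b \<noteq> []"
  by (cases cs) auto

lemma resets_bd:
  assumes "distinct \<Theta>" "\<And>x a S. S \<in> \<sigma> x a \<Longrightarrow> S \<subseteq> set \<Theta>"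
  shows "last (resets cs (bd \<Theta> \<sigma>)) = bd \<Theta> (\<lambda>x a. trunc_all \<Theta> cs ` \<sigma> x a)"
  using assms(2)
proof (induction cs arbitrary: \<sigma>)
  case Nil
  then show ?case by simp
next
  case (Cons \<gamma> cs)
  define \<sigma>1 where "\<sigma>1 = (\<lambda>x a. truncate \<Theta> \<gamma> ` \<sigma> x a)"
  have s1: "S \<subseteq> set \<Theta>" if hS: "S \<in> \<sigma>1 x a" for x a S
  proof -
    obtain S0 where "S0 \<in> \<sigma> x a" "S = truncate \<Theta> \<gamma> S0" using hS unfolding \<sigma>1_def by blast
    then show "S \<subseteq> set \<Theta>" using Cons.prems[of S0 x a] truncate_sub[of \<Theta> \<gamma> S0] by blast
  qed
  have r: "resets (\<gamma> # cs) (bd \<Theta> \<sigma>) = bd \<Theta> \<sigma> # resets cs (bd \<Theta> \<sigma>1)"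
  proof -
    have rb: "reset \<gamma> (bd \<Theta> \<sigma>) = bd \<Theta> \<sigma>1"
      unfolding \<sigma>1_def using reset_bd[OF assms(1), of \<sigma> \<gamma>] Cons.prems by blast
    show ?thesis by (simp add: rb)
  qed
  have e: "(\<lambda>x a. trunc_all \<Theta> cs ` \<sigma>1 x a) = (\<lambda>x a. trunc_all \<Theta> (\<gamma> # cs) ` \<sigma> x a)"
    unfolding \<sigma>1_def trunc_all_Cons by (simp add: image_image)
  have ih: "last (resets cs (bd \<Theta> \<sigma>1)) = bd \<Theta> (\<lambda>x a. trunc_all \<Theta> cs ` \<sigma>1 x a)"
    using Cons.IH[of \<sigma>1] s1 by blast
  show ?case using r ih e resets_ne[of cs "bd \<Theta> \<sigma>1"] by simp
qed

definition csof :: "('c,'x,'a) board \<Rightarrow> 'c list" where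
  "csof b = rev (filter (covered b) (fst b))"

definition Rfof :: "('c,'x,'a) board \<Rightarrow> 'c set \<Rightarrow> 'c set" where
  "Rfof b = trunc_all (fst b) (csof b)"

definition sgRof :: "('c,'x,'a) board \<Rightarrow> 'x \<Rightarrow> 'a \<Rightarrow> 'c set set" where
  "sgRof b = (\<lambda>x a. Rfof b ` snd b x a)"

definition GP :: "'a::{finite,bounded_semilattice_sup_bot} \<Rightarrow> (nat \<Rightarrow> 'c) \<Rightarrow> nat \<Rightarrow> ('x,'a) morph
    \<Rightarrow> ('c,'x,'a) board \<Rightarrow> ('c,'x,'a) board \<Rightarrow> 'c list \<Rightarrow> ('x \<Rightarrow> 'c) \<Rightarrow> bool" where
  "GP \<alpha> ch K m b b' \<Theta>o \<iota> \<longleftrightarrow> (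
     let rs = resets (rev (filter (covered b) (fst b))) b;
         b2 = populate (mdom m) (last rs);
         b3 = succ \<alpha> m b2 \<Theta>o \<iota>;
         b4 = thin b3
     in succ_ok \<alpha> m b2 \<Theta>o \<iota> \<and> b' = b4 \<and> ksparse \<alpha> ch K (mcod m) b4 \<and>
        set (fst b4) \<inter> set (fst b) = (\<Inter>bb \<in> set (rs @ [b2, b3, b4]). set (fst bb)))"

lemma greedy_GP: "greedy_result \<alpha> ch K m b b' \<longleftrightarrow> (\<exists>\<Theta>o \<iota>. GP \<alpha> ch K m b b' \<Theta>o \<iota>)"
  unfolding greedy_result_def GP_def by simp

definition wit where "wit \<alpha> ch K m b b' = (SOME p. GP \<alpha> ch K m b b' (fst p) (snd p))"
definition Tho where "Tho \<alpha> ch K m b b' = fst (wit \<alpha> ch K m b b')"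
definition io where "io \<alpha> ch K m b b' = snd (wit \<alpha> ch K m b b')"

definition Th2of :: "('c,'x,'a) board \<Rightarrow> 'c list" where
  "Th2of b = filter (occ (sgRof b)) (fst b)"
definition sg2of :: "'x set \<Rightarrow> ('c,'x,'a::bot) board \<Rightarrow> 'x \<Rightarrow> 'a \<Rightarrow> 'c set set" where
  "sg2of X b = (\<lambda>x a. if a = bot \<and> x \<in> X \<and> sgRof b x a = {} then {{}} else sgRof b x a)"
definition ssof :: "('x,'a::{semilattice_sup,bot}) morph \<Rightarrow> ('c,'x,'a) board \<Rightarrow> 'x \<Rightarrow> 'a \<Rightarrow> 'c set set" where
  "ssof m b = sstar (mrel m) (sg2of (mdom m) b)"
definition old3of :: "('x,'a::{semilattice_sup,bot}) morph \<Rightarrow> ('c,'x,'a) board \<Rightarrow> 'c list" where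
  "old3of m b = filter (occ (ssof m b)) (Th2of b)"
definition "Th3of \<alpha> ch K m b b' = old3of m b @ Tho \<alpha> ch K m b b'"
definition "sg3of \<alpha> ch K m b b' = (\<lambda>y a. if a = \<alpha> then {} else if a = bot then ssof m b y bot \<union>
    {insert (io \<alpha> ch K m b b' y) S |S. S \<in> ssof m b y \<alpha>} else ssof m b y a)"

lemma thin_eq: "thin (\<Theta>, \<sigma>) = (filter (occ (\<lambda>x a. if \<sigma> x a = {} then {} else {stack_min \<Theta> (\<sigma> x a)})) \<Theta>,
   (\<lambda>x a. if \<sigma> x a = {} then {} else {stack_min \<Theta> (\<sigma> x a)}))"
  unfolding thin_def Let_def by (simp cong: if_cong)

locale gstep =
  fixes \<alpha> :: "'a::{finite,bounded_semilattice_sup_bot}" and ch :: "nat \<Rightarrow> 'c" and K :: nat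
    and m :: "('x,'a) morph" and b b' :: "('c,'x,'a) board"
  assumes alpha: "\<alpha> \<noteq> bot" and morph: "is_morph m" and sp: "ksparse \<alpha> ch K (mdom m) b"
    and gr: "greedy_result \<alpha> ch K m b b'"
begin

abbreviation "Th \<equiv> fst b"
abbreviation "sg \<equiv> snd b"
abbreviation "cs \<equiv> csof b"
abbreviation "Rf \<equiv> Rfof b"
abbreviation "sgR \<equiv> sgRof b"
abbreviation "\<Theta>o \<equiv> Tho \<alpha> ch K m b b'"
abbreviation "\<iota> \<equiv> io \<alpha> ch K m b b'"
abbreviation "X \<equiv> mdom m"
abbreviation "Y \<equiv> mcod m"
abbreviation "Th2 \<equiv> Th2of b"
abbreviation "sg2 \<equiv> sg2of X b"
abbreviation "ss \<equiv> ssof m b"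
abbreviation "old3 \<equiv> old3of m b"
abbreviation "Th3 \<equiv> Th3of \<alpha> ch K m b b'"
abbreviation "sg3 \<equiv> sg3of \<alpha> ch K m b b'"
abbreviation "Th' \<equiv> fst b'"
abbreviation "sg' \<equiv> snd b'"

lemma board: "is_board X b" using sp unfolding ksparse_def by simp
lemma dist: "distinct Th" using board unfolding is_board_def by simp
lemma sub: "S \<in> sg x a \<Longrightarrow> S \<subseteq> set Th" using board unfolding is_board_def by blast
lemma outside: "x \<notin> X \<Longrightarrow> sg x a = {}" using board unfolding is_board_def by blast
lemma occall: "\<gamma> \<in> set Th \<Longrightarrow> occ sg \<gamma>" using board unfolding is_board_def by blast

lemma b_bd: "b = bd Th sg"
proof -
  have "filter (occ sg) Th = Th" using occall by (simp add: filter_id_conv)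
  then show ?thesis unfolding bd_def by simp
qed

lemma last_rs: "last (resets (rev (filter (covered b) Th)) b) = bd Th sgR"
proof -
  have e: "bd Th sg = b" using b_bd by (rule sym)
  have 1: "last (resets cs b) = last (resets cs (bd Th sg))" by (simp only: e)
  have 2: "last (resets cs (bd Th sg)) = bd Th (\<lambda>x a. trunc_all Th cs ` sg x a)"
    by (rule resets_bd[OF dist sub])
  have 3: "sgR = (\<lambda>x a. trunc_all Th cs ` sg x a)" unfolding sgRof_def Rfof_def by simp
  show ?thesis using 1 2 3 unfolding csof_def by simp
qed

lemma b2_eq: "populate X (last (resets (rev (filter (covered b) Th)) b)) = (Th2, sg2)"
  unfolding last_rs bd_def populate_def Th2of_def sg2of_def by (simp cong: if_cong)

lemma GPw: "GP \<alpha> ch K m b b' \<Theta>o \<iota>"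
proof -
  obtain p q where "GP \<alpha> ch K m b b' p q" using gr greedy_GP by blast
  then have "GP \<alpha> ch K m b b' (fst (p,q)) (snd (p,q))" by simp
  then have "GP \<alpha> ch K m b b' (fst (wit \<alpha> ch K m b b')) (snd (wit \<alpha> ch K m b b'))"
    unfolding wit_def by (rule someI)
  then show ?thesis unfolding Tho_def io_def .
qed

lemma succ_eq: "succ \<alpha> m (Th2, sg2) \<Theta>o \<iota> = (Th3, sg3)"
  unfolding succ_def Let_def Th3of_def sg3of_def old3of_def ssof_def by (simp cong: if_cong)

lemma GPu': "GP \<alpha> ch K m b b' \<Theta>o \<iota> = (succ_ok \<alpha> m (Th2, sg2) \<Theta>o \<iota> \<and> b' = thin (Th3, sg3) \<and> ksparse \<alpha> ch K Y (thin (Th3, sg3)) \<and>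
   set (fst (thin (Th3, sg3))) \<inter> set Th = (\<Inter>bb \<in> set (resets (rev (filter (covered b) Th)) b @ [(Th2, sg2), (Th3, sg3), thin (Th3,sg3)]). set (fst bb)))"
  by (simp only: GP_def Let_def b2_eq succ_eq)

lemma GPu: "succ_ok \<alpha> m (Th2, sg2) \<Theta>o \<iota> \<and> b' = thin (Th3, sg3) \<and> ksparse \<alpha> ch K Y (thin (Th3, sg3)) \<and>
   set (fst (thin (Th3, sg3))) \<inter> set Th = (\<Inter>bb \<in> set (resets (rev (filter (covered b) Th)) b @ [(Th2, sg2), (Th3, sg3), thin (Th3,sg3)]). set (fst bb))"
  using GPw unfolding GPu' .

lemma b'_thin: "b' = thin (Th3, sg3)" using GPu by blast
lemma fst_b': "fst b' = fst (thin (Th3, sg3))" using b'_thin by (rule arg_cong)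
lemma snd_b': "snd b' = snd (thin (Th3, sg3))" using b'_thin by (rule arg_cong)

lemma sp': "ksparse \<alpha> ch K Y b'"
proof -
  have "ksparse \<alpha> ch K Y (thin (Th3, sg3))" using GPu by blast
  moreover have "thin (Th3, sg3) = b'" using b'_thin by (rule sym)
  ultimately show ?thesis by (rule back_subst[where P="ksparse \<alpha> ch K Y"])
qed
lemma sok: "succ_ok \<alpha> m (Th2, sg2) \<Theta>o \<iota>" using GPu by blast
lemma interc: "set Th' \<inter> set Th = (\<Inter>bb \<in> set (resets (rev (filter (covered b) Th)) b @ [(Th2, sg2), (Th3, sg3), thin (Th3,sg3)]). set (fst bb))"
  using GPu unfolding fst_b' by blast

lemma board': "is_board Y b'" using sp' unfolding ksparse_def by simp

lemma b'_eq: "b' = (filter (occ (\<lambda>x a. if sg3 x a = {} then {} else {stack_min Th3 (sg3 x a)})) Th3,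
   (\<lambda>x a. if sg3 x a = {} then {} else {stack_min Th3 (sg3 x a)}))"
  using b'_thin unfolding thin_eq .

lemma sg'_fun: "sg' = (\<lambda>x a. if sg3 x a = {} then {} else {stack_min Th3 (sg3 x a)})"
  using arg_cong[OF b'_eq, of snd] by (simp only: snd_conv)

lemma sg'_def: "sg' y a = (if sg3 y a = {} then {} else {stack_min Th3 (sg3 y a)})"
  unfolding sg'_fun by simp

lemma Th'_def: "Th' = filter (occ sg') Th3"
  using arg_cong[OF b'_eq, of fst] by (simp only: fst_conv sg'_fun[symmetric])

lemma Tho_dist: "distinct \<Theta>o" using sok unfolding succ_ok_def by simp
lemma Tho_disj: "set \<Theta>o \<inter> set Th2 = {}" using sok unfolding succ_ok_def by simp
lemma iota_bij: "bij_betw \<iota> {y \<in> Y. ss y \<alpha> \<noteq> {}} (set \<Theta>o)" using sok unfolding succ_ok_def ssof_def by simp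

lemma sg3_eq: "sg3 y a = (if a = \<alpha> then {} else if a = bot then ss y bot \<union> {insert (\<iota> y) S |S. S \<in> ss y \<alpha>} else ss y a)"
  unfolding sg3of_def by simp

lemma Th3_eq: "Th3 = old3 @ \<Theta>o" unfolding Th3of_def by simp

lemma old3_eq: "old3 = filter (occ ss) Th2" unfolding old3of_def by simp

lemma Th2_eq: "Th2 = filter (occ sgR) Th" unfolding Th2of_def by simp

lemma dist3: "distinct Th3"
  using Tho_dist Tho_disj dist unfolding Th3of_def old3of_def Th2of_def by auto

lemma sg2_cases: "S0 \<in> sg2 x a \<Longrightarrow> (\<exists>S\<in>sg x a. S0 = Rf S) \<or> (S0 = {} \<and> a = bot \<and> x \<in> X)"
  unfolding sg2of_def sgRof_def by (auto split: if_splits)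

lemma sg2_of: "S \<in> sg x a \<Longrightarrow> Rf S \<in> sg2 x a"
  unfolding sg2of_def sgRof_def by auto

lemma sg2_bot: "x \<in> X \<Longrightarrow> sg2 x bot \<noteq> {}"
  unfolding sg2of_def by auto

lemma sg2_ne: "sg x a \<noteq> {} \<Longrightarrow> sg2 x a \<noteq> {}"
  using sg2_of by blast

lemma ss_elem: "S \<in> ss y a \<longleftrightarrow> (\<exists>x a0 c. S \<in> sg2 x a0 \<and> (x, c, y) \<in> mrel m \<and> a = sup a0 c)"
  unfolding ssof_def sstar_def by blast

lemma mrel_sub: "(x, c, y) \<in> mrel m \<Longrightarrow> x \<in> X \<and> y \<in> Y"
  using morph unfolding is_morph_def by blast

lemma ss_sub: "S \<in> ss y a \<Longrightarrow> S \<subseteq> set old3"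
proof
  fix z assume S: "S \<in> ss y a" and z: "z \<in> S"
  then obtain x a0 c where h: "S \<in> sg2 x a0" "(x, c, y) \<in> mrel m" "a = sup a0 c"
    using ss_elem by blast
  have o: "occ ss z" using S z unfolding occ_def by blast
  from sg2_cases[OF h(1)] obtain S1 where S1: "S1 \<in> sg x a0" "S = Rf S1"
    using z by blast
  have "z \<in> S1" using z S1(2) trunc_all_sub[of Th cs S1] unfolding Rfof_def by blast
  then have "z \<in> set Th" using sub[OF S1(1)] by blast
  moreover have "occ sgR z" using S1 z unfolding occ_def sgRof_def by blast
  ultimately show "z \<in> set old3" using o unfolding old3of_def Th2of_def by simp
qed

lemma iota_in: "S \<in> ss y \<alpha> \<Longrightarrow> \<iota> y \<in> set \<Theta>o"
proof -
  assume S: "S \<in> ss y \<alpha>"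
  then obtain x a0 c where "(x, c, y) \<in> mrel m" using ss_elem by blast
  then have "y \<in> Y" using mrel_sub by blast
  then have "y \<in> {y \<in> Y. ss y \<alpha> \<noteq> {}}" using S by blast
  then show ?thesis using iota_bij bij_betw_apply by fast
qed

lemma sg3_sub: "S \<in> sg3 y a \<Longrightarrow> S \<subseteq> set Th3"
proof -
  assume S: "S \<in> sg3 y a"
  note S = S[unfolded sg3_eq]
  note Th3_eq[simp]
  show ?thesis
  proof (cases "a = \<alpha>")
    case False
    show ?thesis
    proof (cases "a = bot")
      case True
      then have "S \<in> ss y bot \<or> (\<exists>S0. S = insert (\<iota> y) S0 \<and> S0 \<in> ss y \<alpha>)"
        using S False by auto
      then show ?thesis using ss_sub iota_in by fastforce
    next
      case False2: False
      then show ?thesis using S False ss_sub by fastforce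
    qed
  qed (use S in simp)
qed

lemma sg3_fin: "finite (sg3 y a)"
  by (rule finite_subset[of _ "Pow (set Th3)"]) (use sg3_sub in auto)

lemma sg'_elem: "S \<in> sg' y a \<Longrightarrow> S \<in> sg3 y a \<and> (\<forall>S'\<in>sg3 y a. S' \<noteq> S \<longrightarrow> stack_less Th3 S S')"
proof -
  assume S: "S \<in> sg' y a"
  then have ne: "sg3 y a \<noteq> {}" and eq: "S = stack_min Th3 (sg3 y a)"
    unfolding sg'_def by (auto split: if_splits)
  show ?thesis using stack_min_prop[OF sg3_fin ne _ dist3] sg3_sub eq by blast
qed

lemma sg'_ne: "sg3 y a \<noteq> {} \<Longrightarrow> sg' y a \<noteq> {}"
  unfolding sg'_def by simp

lemma fwd:
  assumes "S0 \<in> sg2 x a" "(x, c, y) \<in> mrel m"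
  shows "(sup a c \<noteq> \<alpha> \<longrightarrow> S0 \<in> sg3 y (sup a c)) \<and> (sup a c = \<alpha> \<longrightarrow> insert (\<iota> y) S0 \<in> sg3 y bot)"
proof -
  have s: "S0 \<in> ss y (sup a c)" using assms ss_elem by blast
  show ?thesis
  proof (intro conjI impI)
    assume "sup a c \<noteq> \<alpha>"
    then show "S0 \<in> sg3 y (sup a c)" using s unfolding sg3_eq by auto
  next
    assume "sup a c = \<alpha>"
    then show "insert (\<iota> y) S0 \<in> sg3 y bot" using s alpha unfolding sg3_eq by auto
  qed
qed

lemma bwd:
  assumes "S' \<in> sg3 y a'"
  shows "\<exists>x a c S0. S0 \<in> sg2 x a \<and> (x, c, y) \<in> mrel m \<and>
     ((sup a c \<noteq> \<alpha> \<and> a' = sup a c \<and> S' = S0) \<or> (sup a c = \<alpha> \<and> a' = bot \<and> S' = insert (\<iota> y) S0))"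
proof -
  note assms = assms[unfolded sg3_eq]
  have na: "a' \<noteq> \<alpha>" using assms by (auto split: if_splits)
  consider (a) "S' \<in> ss y a'" | (b) "a' = bot" "\<exists>S0. S' = insert (\<iota> y) S0 \<and> S0 \<in> ss y \<alpha>"
    using assms by (auto split: if_splits)
  then show ?thesis
  proof cases
    case a
    then obtain x a0 c where "S' \<in> sg2 x a0" "(x, c, y) \<in> mrel m" "a' = sup a0 c" using ss_elem by blast
    then show ?thesis using na by blast
  next
    case b
    then obtain S0 where S0: "S' = insert (\<iota> y) S0" "S0 \<in> ss y \<alpha>" by blast
    then obtain x a0 c where h: "S0 \<in> sg2 x a0" "(x, c, y) \<in> mrel m" "\<alpha> = sup a0 c" using ss_elem by blast
    have "(sup a0 c = \<alpha> \<and> a' = bot \<and> S' = insert (\<iota> y) S0)" using h(3) b(1) S0(1) by simp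
    then show ?thesis using h(1,2) by blast
  qed
qed

lemma old3_sub: "set old3 \<subseteq> set Th" unfolding old3_eq Th2_eq by auto

lemma Th'_sub: "set Th' \<subseteq> set Th3" unfolding Th'_def by auto

lemma ord_new: "u \<in> set Th' \<Longrightarrow> v \<in> set Th' \<Longrightarrow> chip_le Th' u v \<longleftrightarrow> chip_le Th3 u v"
  unfolding Th'_def using cle_filter[OF dist3] by simp

lemma ord_old:
  assumes "u \<in> set old3" "v \<in> set old3"
  shows "chip_le Th3 u v \<longleftrightarrow> chip_le Th u v"
proof -
  have "chip_le Th3 u v \<longleftrightarrow> chip_le old3 u v" using cle_append1[OF dist3[unfolded Th3_eq] assms] unfolding Th3_eq .
  also have "\<dots> \<longleftrightarrow> chip_le Th2 u v"
    using cle_filter[of Th2 "occ ss" u v] dist assms unfolding old3_eq Th2_eq by simp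
  also have "\<dots> \<longleftrightarrow> chip_le Th u v"
    using cle_filter[of Th "occ sgR" u v] dist assms unfolding old3_eq Th2_eq by simp
  finally show ?thesis .
qed

lemma ord_below: "chip_le Th3 z u \<Longrightarrow> u \<in> set old3 \<Longrightarrow> z \<in> set old3"
proof -
  assume h: "chip_le Th3 z u" "u \<in> set old3"
  have "z \<in> set Th3" using cle_mem[OF h(1)] by blast
  moreover have "z \<notin> set \<Theta>o" using cle_append3[OF dist3[unfolded Th3_eq] _ h(2)] h(1) unfolding Th3_eq by blast
  ultimately show ?thesis unfolding Th3_eq by simp
qed

lemma ord_newchip: "u \<in> set old3 \<Longrightarrow> v \<in> set \<Theta>o \<Longrightarrow> chip_le Th3 u v"
  unfolding Th3_eq by (rule cle_append2)

lemma inter: "\<gamma> \<in> set Th \<Longrightarrow> \<gamma> \<in> set Th' \<Longrightarrow> \<gamma> \<in> set old3 \<and> \<gamma> \<notin> set \<Theta>o"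
proof -
  assume h: "\<gamma> \<in> set Th" "\<gamma> \<in> set Th'"
  then have "\<gamma> \<in> (\<Inter>bb \<in> set (resets (rev (filter (covered b) Th)) b @ [(Th2, sg2), (Th3, sg3), thin (Th3,sg3)]). set (fst bb))"
    using interc by blast
  then have "\<gamma> \<in> set Th2" "\<gamma> \<in> set Th3" by auto
  then show ?thesis using Tho_disj unfolding Th3_eq by auto
qed

lemma ord_keep:
  assumes "u \<in> set Th" "u \<in> set Th'" "v \<in> set Th" "v \<in> set Th'"
  shows "chip_le Th' u v \<longleftrightarrow> chip_le Th u v"
proof -
  have "u \<in> set old3" "v \<in> set old3" using inter assms by blast+
  then show ?thesis using ord_new[OF assms(2,4)] ord_old by simp
qed

lemma cs_covered: "\<gamma> \<in> set cs \<longleftrightarrow> covered b \<gamma>"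
  unfolding csof_def covered_def by auto

lemma Rf_sub: "Rf S \<subseteq> S" unfolding Rfof_def by (rule trunc_all_sub)

lemma dist': "distinct Th'" using board' unfolding is_board_def by simp
lemma sub': "S \<in> sg' x a \<Longrightarrow> S \<subseteq> set Th'" using board' unfolding is_board_def by blast

end


lemma inf_enum:
  fixes P :: "nat \<Rightarrow> bool"
  assumes "\<forall>M. \<exists>n\<ge>M. P n"
  shows "\<exists>e. strict_mono e \<and> (\<forall>i. P (e i)) \<and> (\<forall>i m. e i < m \<and> m < e (Suc i) \<longrightarrow> \<not> P m)"
proof -
  define nx where "nx n = (LEAST m. n < m \<and> P m)" for n
  have nx: "n < nx n \<and> P (nx n)" for n
  proof -
    obtain m where "m \<ge> Suc n" "P m" using assms by blast
    then have "n < m \<and> P m" by simp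
    then show ?thesis unfolding nx_def by (rule LeastI)
  qed
  have nxmin: "\<not> P m" if "n < m" "m < nx n" for n m
    using not_less_Least[of m "\<lambda>m. n < m \<and> P m"] that unfolding nx_def by blast
  obtain m0 where "P m0" using assms by blast
  define e where "e = rec_nat m0 (\<lambda>_ x. nx x)"
  have e0: "e 0 = m0" and eS: "e (Suc i) = nx (e i)" for i unfolding e_def by simp_all
  have "strict_mono e" unfolding strict_mono_Suc_iff using eS nx by simp
  moreover have "P (e i)" for i by (cases i) (use e0 eS nx \<open>P m0\<close> in auto)
  moreover have "\<forall>i m. e i < m \<and> m < e (Suc i) \<longrightarrow> \<not> P m"
  proof (intro allI impI)
    fix i m assume "e i < m \<and> m < e (Suc i)"
    then show "\<not> P m" using nxmin[of "e i" m] eS[of i] by simp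
  qed
  ultimately show ?thesis by blast
qed

lemma inf_unb: "infinite (A::nat set) \<Longrightarrow> \<exists>n\<ge>m. n \<in> A"
proof (rule ccontr)
  assume "infinite A" "\<not> (\<exists>n\<ge>m. n \<in> A)"
  then have "\<forall>n\<in>A. n < m" by (meson not_le)
  then have "A \<subseteq> {..<m}" by auto
  then show False using \<open>infinite A\<close> finite_subset by blast
qed

primrec Jf :: "(nat \<Rightarrow> 'a::semilattice_sup) \<Rightarrow> nat \<Rightarrow> nat \<Rightarrow> 'a" where
  "Jf cs n 0 = cs n"
| "Jf cs n (Suc d) = sup (Jf cs n d) (cs (n + Suc d))"

lemma Jf_cong: "(\<forall>i\<le>d. cs (n+i) = cs' (n+i)) \<Longrightarrow> Jf cs n d = Jf cs' n d"
  by (induction d) auto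

lemma Jf_mono: "j \<le> d \<Longrightarrow> Jf cs n j \<le> Jf cs n d"
proof (induction d)
  case 0 then show ?case by simp
next
  case (Suc d)
  show ?case
  proof (cases "j = Suc d")
    case False
    then have "Jf cs n j \<le> Jf cs n d" using Suc by simp
    then show ?thesis by (simp add: le_supI1)
  qed simp
qed

lemma Jf_ge: "cs (n+j) \<le> Jf cs n j"
  by (cases j) auto

lemma Pp_path:
  assumes "\<forall>i\<le>d. (xs (n+i), cs (n+i), xs (n+i+1)) \<in> mrel (\<tau> (n+i))"
  shows "(xs n, Jf cs n d, xs (n+d+1)) \<in> Pp \<tau> n d"
  using assms
proof (induction d)
  case 0 then show ?case by simp
next
  case (Suc d)
  have ih: "(xs n, Jf cs n d, xs (n+d+1)) \<in> Pp \<tau> n d" using Suc by simp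
  have ed: "(xs (n + Suc d), cs (n + Suc d), xs (n + Suc d + 1)) \<in> mrel (\<tau> (n + Suc d))"
    using Suc.prems by blast
  have "xs (n+d+1) = xs (n + Suc d)" by simp
  then show ?case unfolding Pp.simps rcomp_def using ih ed by auto
qed

lemma Pp_dec:
  "(s, c, t) \<in> Pp \<tau> n d \<Longrightarrow> \<exists>xs cs. xs n = s \<and> xs (n+d+1) = t \<and>
     (\<forall>i\<le>d. (xs (n+i), cs (n+i), xs (n+i+1)) \<in> mrel (\<tau> (n+i))) \<and> Jf cs n d = c"
proof (induction d arbitrary: c t)
  case 0
  show ?case
    by (rule exI[of _ "\<lambda>i. if i = n then s else t"], rule exI[of _ "\<lambda>_. c"]) (use 0 in simp)
next
  case (Suc d)
  obtain y a b0 where h: "(s, a, y) \<in> Pp \<tau> n d" "(y, b0, t) \<in> mrel (\<tau> (n + Suc d))" "sup a b0 = c"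
    using Suc.prems unfolding Pp.simps rcomp_def by blast
  obtain xs cs where xc: "xs n = s" "xs (n+d+1) = y"
     "\<forall>i\<le>d. (xs (n+i), cs (n+i), xs (n+i+1)) \<in> mrel (\<tau> (n+i))" "Jf cs n d = a"
    using Suc.IH[OF h(1)] by blast
  define xs' where "xs' i = (if i = n + Suc d + 1 then t else xs i)" for i
  define cs' where "cs' i = (if i = n + Suc d then b0 else cs i)" for i
  have e1: "xs' n = s" using xc unfolding xs'_def by simp
  have e2: "xs' (n + Suc d + 1) = t" unfolding xs'_def by simp
  have e3: "\<forall>i\<le>Suc d. (xs' (n+i), cs' (n+i), xs' (n+i+1)) \<in> mrel (\<tau> (n+i))"
  proof (intro allI impI)
    fix i assume i: "i \<le> Suc d"
    show "(xs' (n+i), cs' (n+i), xs' (n+i+1)) \<in> mrel (\<tau> (n+i))"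
    proof (cases "i = Suc d")
      case True
      then show ?thesis using h(2) xc(2) unfolding xs'_def cs'_def by simp
    next
      case False
      then have "i \<le> d" using i by simp
      then show ?thesis using xc(3) unfolding xs'_def cs'_def by simp
    qed
  qed
  have "Jf cs' n d = Jf cs n d" by (rule Jf_cong) (simp add: cs'_def)
  then have e4: "Jf cs' n (Suc d) = c" using xc(4) h(3) unfolding cs'_def by simp
  show ?case using e1 e2 e3 e4 by blast
qed

lemma Pp_shift: "Pp \<tau> (N + n) d = Pp (\<lambda>i. \<tau> (N + i)) n d"
  by (induction d) (simp_all add: add.assoc)

fun desc :: "(nat \<Rightarrow> 'n set) \<Rightarrow> (nat \<Rightarrow> 'n \<Rightarrow> 'n \<Rightarrow> bool) \<Rightarrow> nat \<Rightarrow> 'n \<Rightarrow> nat \<Rightarrow> 'n set" where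
  "desc V E n v 0 = {v}"
| "desc V E n v (Suc k) = {w \<in> V (n + Suc k). \<exists>u\<in>desc V E n v k. E (n+k) u w}"

lemma desc_empty_mono: "desc V E n v k = {} \<Longrightarrow> k \<le> k' \<Longrightarrow> desc V E n v k' = {}"
proof (induction k' )
  case 0 then show ?case by simp
next
  case (Suc k')
  show ?case
  proof (cases "k = Suc k'")
    case False
    then have "desc V E n v k' = {}" using Suc by simp
    then show ?thesis by simp
  qed (use Suc in simp)
qed

lemma desc_Suc_child:
  "x \<in> desc V E n v (Suc k) \<Longrightarrow> \<exists>w. w \<in> V (Suc n) \<and> E n v w \<and> x \<in> desc V E (Suc n) w k"
proof (induction k arbitrary: x)
  case 0
  then show ?case by simp
next
  case (Suc k)
  then obtain u where u: "x \<in> V (n + Suc (Suc k))" "u \<in> desc V E n v (Suc k)" "E (n + Suc k) u x"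
    by auto
  obtain w where w: "w \<in> V (Suc n)" "E n v w" "u \<in> desc V E (Suc n) w k" using Suc.IH[OF u(2)] by blast
  have "x \<in> desc V E (Suc n) w (Suc k)" using u w by auto
  then show ?case using w by blast
qed

lemma desc_cover:
  fixes V :: "nat \<Rightarrow> 'n set" and E :: "nat \<Rightarrow> 'n \<Rightarrow> 'n \<Rightarrow> bool" and n k :: nat
  assumes pred: "\<And>n w. w \<in> V (Suc n) \<Longrightarrow> \<exists>v\<in>V n. E n v w"
  shows "w \<in> V (n + k) \<Longrightarrow> \<exists>v\<in>V n. w \<in> desc V E n v k"
proof (induction k arbitrary: w)
  case 0
  then show ?case by auto
next
  case (Suc k)
  obtain u where u: "u \<in> V (n + k)" "E (n + k) u w" using pred[where n="n + k" and w=w] Suc.prems by auto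
  obtain v where v: "v \<in> V n" "u \<in> desc V E n v k" using Suc.IH[OF u(1)] by blast
  have "w \<in> desc V E n v (Suc k)" using Suc.prems u v by auto
  then show ?case using v by blast
qed

lemma koenig:
  fixes V :: "nat \<Rightarrow> 'n set" and E :: "nat \<Rightarrow> 'n \<Rightarrow> 'n \<Rightarrow> bool"
  assumes fin: "\<And>n. finite (V n)" and ne: "\<And>n. V n \<noteq> {}"
    and pred: "\<And>n w. w \<in> V (Suc n) \<Longrightarrow> \<exists>v\<in>V n. E n v w"
  shows "\<exists>f. \<forall>n. f n \<in> V n \<and> E n (f n) (f (Suc n))"
proof -
  define inf where "inf n v \<longleftrightarrow> v \<in> V n \<and> (\<forall>k. desc V E n v k \<noteq> {})" for n v
  have start: "\<exists>v. inf n v" for n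
  proof (rule ccontr)
    assume "\<nexists>v. inf n v"
    then have "\<forall>v\<in>V n. \<exists>k. desc V E n v k = {}" unfolding inf_def by blast
    then obtain kf where kf: "\<forall>v\<in>V n. desc V E n v (kf v) = {}" by metis
    define KK where "KK = Max (kf ` V n)"
    have "\<forall>v\<in>V n. desc V E n v KK = {}"
      using kf desc_empty_mono fin unfolding KK_def by (metis Max_ge finite_imageI imageI)
    moreover obtain w where "w \<in> V (n + KK)" using ne by blast
    ultimately show False using desc_cover[where V=V and E=E and w=w and n=n and k=KK, OF pred] by blast
  qed
  have step: "\<exists>w. E n v w \<and> inf (Suc n) w" if iv: "inf n v" for n v
  proof (rule ccontr)
    assume nn: "\<nexists>w. E n v w \<and> inf (Suc n) w"
    let ?C = "{w \<in> V (Suc n). E n v w}"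
    have "\<forall>w\<in>?C. \<exists>k. desc V E (Suc n) w k = {}" using nn unfolding inf_def by blast
    then obtain kf where kf: "\<forall>w\<in>?C. desc V E (Suc n) w (kf w) = {}" by metis
    define KK where "KK = Max (insert 0 (kf ` ?C))"
    have fC: "finite ?C" using fin by simp
    have "\<forall>w\<in>?C. desc V E (Suc n) w KK = {}"
    proof
      fix w assume w: "w \<in> ?C"
      have "kf w \<le> KK" unfolding KK_def using fC w by simp
      moreover have "desc V E (Suc n) w (kf w) = {}" using kf w by blast
      ultimately show "desc V E (Suc n) w KK = {}" by (metis desc_empty_mono)
    qed
    moreover obtain x where "x \<in> desc V E n v (Suc KK)" using iv unfolding inf_def by blast
    then obtain w where "w \<in> V (Suc n)" "E n v w" "x \<in> desc V E (Suc n) w KK"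
      using desc_Suc_child by metis
    ultimately show False by blast
  qed
  define f where "f = rec_nat (SOME v. inf 0 v) (\<lambda>n x. SOME w. E n x w \<and> inf (Suc n) w)"
  have f0: "f 0 = (SOME v. inf 0 v)" and fS: "f (Suc n) = (SOME w. E n (f n) w \<and> inf (Suc n) w)" for n
    unfolding f_def by simp_all
  have fi: "inf n (f n)" for n
  proof (induction n)
    case 0 then show ?case unfolding f0 using start by (metis someI)
  next
    case (Suc n)
    then show ?case unfolding fS using step[OF Suc] by (metis (mono_tags, lifting) someI)
  qed
  have fE: "E n (f n) (f (Suc n))" for n
    unfolding fS using step[OF fi[of n]] by (metis (mono_tags, lifting) someI)
  show ?thesis using fi fE unfolding inf_def by blast
qed


locale srun =
  fixes \<alpha> :: "'a::{finite,bounded_semilattice_sup_bot}" and Ob :: "'x set set" and S :: "'x set"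
    and M :: "('x,'a) morph set" and ch :: "nat \<Rightarrow> 'c::countable"
    and g :: "('x,'a) morph \<Rightarrow> ('c,'x,'a) board \<Rightarrow> ('c,'x,'a) board" and \<tau> :: "nat \<Rightarrow> ('x,'a) morph"
  assumes alpha: "\<alpha> \<noteq> bot" and finOb: "finite Ob" and finX: "\<forall>X\<in>Ob. finite X" and SOb: "S \<in> Ob"
    and Mok: "\<forall>m\<in>M. is_morph m \<and> mdom m \<in> Ob \<and> mcod m \<in> Ob" and injc: "inj ch"
    and choice: "safra_choice \<alpha> ch Ob M g" and tauM: "\<forall>n. \<tau> n \<in> M"
    and H: "\<forall>n. mdom (\<tau> n) = fst (safra_run S g \<tau> n)"
begin

abbreviation "K \<equiv> safraK Ob"
definition bb where "bb n = snd (safra_run S g \<tau> n)"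

abbreviation "Th n \<equiv> fst (bb n)"
abbreviation "sg n \<equiv> snd (bb n)"
abbreviation "Rf n \<equiv> Rfof (bb n)"
abbreviation "iot n \<equiv> io \<alpha> ch K (\<tau> n) (bb n) (bb (Suc n))"
abbreviation "Ton n \<equiv> Tho \<alpha> ch K (\<tau> n) (bb n) (bb (Suc n))"
abbreviation "Th3 n \<equiv> Th3of \<alpha> ch K (\<tau> n) (bb n) (bb (Suc n))"
abbreviation "sg3 n \<equiv> sg3of \<alpha> ch K (\<tau> n) (bb n) (bb (Suc n))"
abbreviation "sg2 n \<equiv> sg2of (mdom (\<tau> n)) (bb n)"
abbreviation "old3 n \<equiv> old3of (\<tau> n) (bb n)"

lemma bb0: "bb 0 = ([], \<lambda>x a. {})" unfolding bb_def by simp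
lemma bbS: "bb (Suc n) = g (\<tau> n) (bb n)" unfolding bb_def by simp
lemma dom0: "mdom (\<tau> 0) = S" using H by simp
lemma domS: "mdom (\<tau> (Suc n)) = mcod (\<tau> n)" using H by simp
lemma morph: "is_morph (\<tau> n)" using Mok tauM by blast

lemma gs_of: "ksparse \<alpha> ch K (mdom (\<tau> n)) (bb n) \<Longrightarrow> gstep \<alpha> ch K (\<tau> n) (bb n) (bb (Suc n))"
proof -
  assume k: "ksparse \<alpha> ch K (mdom (\<tau> n)) (bb n)"
  have "greedy_result \<alpha> ch K (\<tau> n) (bb n) (g (\<tau> n) (bb n))"
    using choice tauM k unfolding safra_choice_def by blast
  then have "greedy_result \<alpha> ch K (\<tau> n) (bb n) (bb (Suc n))" unfolding bbS .
  then show ?thesis using alpha morph k by unfold_locales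
qed

lemma ksp: "ksparse \<alpha> ch K (mdom (\<tau> n)) (bb n)"
proof (induction n)
  case 0
  show ?case unfolding bb0 dom0 ksparse_def is_board_def occ_def by simp
next
  case (Suc n)
  interpret s: gstep \<alpha> ch K "\<tau> n" "bb n" "bb (Suc n)" using gs_of[OF Suc] .
  show ?case unfolding domS using s.sp' .
qed

lemma gs: "gstep \<alpha> ch K (\<tau> n) (bb n) (bb (Suc n))" using gs_of[OF ksp] .

lemma board_n: "is_board (mdom (\<tau> n)) (bb n)" using ksp unfolding ksparse_def by simp
lemma dist_n: "distinct (Th n)" using board_n unfolding is_board_def by simp
lemma sub_n: "St \<in> sg n x a \<Longrightarrow> St \<subseteq> set (Th n)" using board_n unfolding is_board_def by blast
lemma dom_n: "St \<in> sg n x a \<Longrightarrow> x \<in> mdom (\<tau> n)" using board_n unfolding is_board_def by blast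
lemma occ_n: "\<gamma> \<in> set (Th n) \<Longrightarrow> \<exists>x a St. St \<in> sg n x a \<and> \<gamma> \<in> St"
  using board_n unfolding is_board_def occ_def by blast
lemma fin_st: "finite (sg n x a)"
proof (rule finite_subset[of _ "Pow (set (Th n))"])
  show "sg n x a \<subseteq> Pow (set (Th n))" using sub_n[of _ n x a] by blast
qed simp
lemma sing_n: "St \<in> sg n x a \<Longrightarrow> St' \<in> sg n x a \<Longrightarrow> St = St'"
proof -
  assume h: "St \<in> sg n x a" "St' \<in> sg n x a"
  have "card (sg n x a) \<le> Suc 0" using ksp unfolding ksparse_def by simp
  then show ?thesis using card_le_Suc0_iff_eq[OF fin_st] h by blast
qed
lemma Kb_n: "set (Th n) \<subseteq> Kbar ch K (card (UNIV :: 'a set))" using ksp unfolding ksparse_def by simp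
lemma len_n: "length (Th n) \<le> K * card (UNIV :: 'a set)" using ksp unfolding ksparse_def by simp
lemma findom: "finite (mdom (\<tau> n))" using morph unfolding is_morph_def by simp

lemma ord_keep_n:
  assumes "u \<in> set (Th n)" "u \<in> set (Th (Suc n))" "v \<in> set (Th n)" "v \<in> set (Th (Suc n))"
  shows "chip_le (Th (Suc n)) u v \<longleftrightarrow> chip_le (Th n) u v"
proof -
  interpret s: gstep \<alpha> ch K "\<tau> n" "bb n" "bb (Suc n)" by (rule gs)
  show ?thesis using s.ord_keep[OF assms] .
qed

lemma sound:
  assumes cov: "infinite {n. covered (bb n) \<gamma>}" and pers: "finite {n. \<gamma> \<notin> set (Th n)}"
  shows "trace_cond \<alpha> \<tau>"
proof -
  obtain N where N0: "\<forall>n\<in>{n. \<gamma> \<notin> set (Th n)}. n < N" using pers finite_nat_set_iff_bounded by blast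
  have N: "\<gamma> \<in> set (Th n)" if "n \<ge> N" for n using N0 that by force
  define V where "V n = {(x,a,St). St \<in> sg (N+n) x a \<and> \<gamma> \<in> St}" for n
  define E where "E n = (\<lambda>(x,a,St) (y,a',St'). \<exists>c. (x,c,y) \<in> mrel (\<tau> (N+n)) \<and>
       ((sup a c \<noteq> \<alpha> \<and> a' = sup a c \<and> St' = Rf (N+n) St) \<or>
        (sup a c = \<alpha> \<and> a' = bot \<and> St' = insert (iot (N+n) y) (Rf (N+n) St))))" for n
  have fin: "finite (V n)" for n
  proof (rule finite_subset[of _ "mdom (\<tau> (N+n)) \<times> (UNIV :: 'a set) \<times> Pow (set (Th (N+n)))"])
    show "V n \<subseteq> mdom (\<tau> (N+n)) \<times> (UNIV :: 'a set) \<times> Pow (set (Th (N+n)))"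
      unfolding V_def using dom_n sub_n by blast
    show "finite (mdom (\<tau> (N+n)) \<times> (UNIV :: 'a set) \<times> Pow (set (Th (N+n))))"
      using findom by simp
  qed
  have ne: "V n \<noteq> {}" for n
  proof -
    have "\<gamma> \<in> set (Th (N+n))" using N by simp
    then obtain x a St where "St \<in> sg (N+n) x a" "\<gamma> \<in> St" using occ_n by blast
    then show ?thesis unfolding V_def by blast
  qed
  have pred: "\<exists>v\<in>V n. E n v w" if w: "w \<in> V (Suc n)" for n w
  proof -
    obtain y a' St' where wd: "w = (y, a', St')" by (cases w) auto
    interpret s: gstep \<alpha> ch K "\<tau> (N+n)" "bb (N+n)" "bb (Suc (N+n))" by (rule gs)
    have St': "St' \<in> sg (Suc (N+n)) y a'" "\<gamma> \<in> St'" using w wd unfolding V_def by auto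
    have "St' \<in> sg3 (N+n) y a'" using s.sg'_elem[OF St'(1)] by blast
    then obtain x a c S0 where h: "S0 \<in> sg2 (N+n) x a" "(x, c, y) \<in> mrel (\<tau> (N+n))"
      "(sup a c \<noteq> \<alpha> \<and> a' = sup a c \<and> St' = S0) \<or> (sup a c = \<alpha> \<and> a' = bot \<and> St' = insert (iot (N+n) y) S0)"
      using s.bwd by blast
    have gin: "\<gamma> \<in> set (Th (N+n))" "\<gamma> \<in> set (Th (Suc (N+n)))" using N by auto
    have gno: "\<gamma> \<notin> set (Ton (N+n))" using s.inter[OF gin] by blast
    have gS0: "\<gamma> \<in> S0"
    proof (cases "sup a c = \<alpha>")
      case True
      then have "St' = insert (iot (N+n) y) S0" using h(3) by blast
      moreover have "S0 \<in> s.ss y \<alpha>" using h(1,2) True s.ss_elem by blast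
      then have "iot (N+n) y \<in> set (Ton (N+n))" using s.iota_in by blast
      ultimately show ?thesis using St'(2) gno by auto
    next
      case False
      then show ?thesis using h(3) St'(2) by auto
    qed
    then obtain St where St: "St \<in> sg (N+n) x a" "S0 = Rf (N+n) St"
      using s.sg2_cases[OF h(1)] by blast
    have "\<gamma> \<in> St" using gS0 St(2) s.Rf_sub by blast
    then have v: "(x, a, St) \<in> V n" using St(1) unfolding V_def by simp
    have "E n (x, a, St) w" unfolding E_def wd using h St(2) by auto
    then show ?thesis using v by blast
  qed
  obtain f where f: "\<forall>n. f n \<in> V n \<and> E n (f n) (f (Suc n))"
    using koenig[of V E, OF fin ne pred] by blast
  define xf where "xf n = fst (f n)" for n
  define af where "af n = fst (snd (f n))" for n
  define Sf where "Sf n = snd (snd (f n))" for n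
  have fd: "f n = (xf n, af n, Sf n)" for n unfolding xf_def af_def Sf_def by simp
  have fV: "Sf n \<in> sg (N+n) (xf n) (af n)" "\<gamma> \<in> Sf n" for n
  proof -
    have "f n \<in> V n" using f by blast
    then have "(xf n, af n, Sf n) \<in> V n" unfolding fd .
    then show "Sf n \<in> sg (N+n) (xf n) (af n)" "\<gamma> \<in> Sf n" unfolding V_def by simp_all
  qed
  have fE: "\<exists>c. (xf n, c, xf (Suc n)) \<in> mrel (\<tau> (N+n)) \<and>
       ((sup (af n) c \<noteq> \<alpha> \<and> af (Suc n) = sup (af n) c \<and> Sf (Suc n) = Rf (N+n) (Sf n)) \<or>
        (sup (af n) c = \<alpha> \<and> af (Suc n) = bot \<and> Sf (Suc n) = insert (iot (N+n) (xf (Suc n))) (Rf (N+n) (Sf n))))" for n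
  proof -
    have "E n (f n) (f (Suc n))" using f by blast
    then have "E n (xf n, af n, Sf n) (xf (Suc n), af (Suc n), Sf (Suc n))" unfolding fd .
    then show ?thesis unfolding E_def by simp
  qed
  define cf where "cf n = (SOME c. (xf n, c, xf (Suc n)) \<in> mrel (\<tau> (N+n)) \<and>
       ((sup (af n) c \<noteq> \<alpha> \<and> af (Suc n) = sup (af n) c \<and> Sf (Suc n) = Rf (N+n) (Sf n)) \<or>
        (sup (af n) c = \<alpha> \<and> af (Suc n) = bot \<and> Sf (Suc n) = insert (iot (N+n) (xf (Suc n))) (Rf (N+n) (Sf n)))))" for n
  have cf: "(xf n, cf n, xf (Suc n)) \<in> mrel (\<tau> (N+n)) \<and>
       ((sup (af n) (cf n) \<noteq> \<alpha> \<and> af (Suc n) = sup (af n) (cf n) \<and> Sf (Suc n) = Rf (N+n) (Sf n)) \<or>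
        (sup (af n) (cf n) = \<alpha> \<and> af (Suc n) = bot \<and> Sf (Suc n) = insert (iot (N+n) (xf (Suc n))) (Rf (N+n) (Sf n))))" for n
    unfolding cf_def by (rule someI_ex) (rule fE)
  define Cr where "Cr n \<longleftrightarrow> sup (af n) (cf n) = \<alpha>" for n
  have cfE: "(xf n, cf n, xf (Suc n)) \<in> mrel (\<tau> (N+n))" for n using cf by blast
  have nCr: "af (Suc n) = sup (af n) (cf n) \<and> Sf (Suc n) = Rf (N+n) (Sf n)" if "\<not> Cr n" for n
    using cf[of n] that unfolding Cr_def by auto
  have yCr: "af (Suc n) = bot" if "Cr n" for n
    using cf[of n] that unfolding Cr_def by auto
  have below: "\<forall>z\<in>Sf m. chip_le (Th (N+m)) z \<gamma>"
    if cv: "covered (bb (N+n1)) \<gamma>" and m: "n1 < m" and nc: "\<forall>j. n1 \<le> j \<and> j < m \<longrightarrow> \<not> Cr j" for n1 m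
    using m nc
  proof (induction m)
    case 0 then show ?case by simp
  next
    case (Suc m)
    have ncm: "\<not> Cr m" using Suc.prems by simp
    have eq: "Sf (Suc m) = Rf (N+m) (Sf m)" using nCr[OF ncm] by blast
    have bbi: "bb (N + Suc m) = bb (Suc (N + m))" by simp
    have ord: "chip_le (Th (N + Suc m)) z \<gamma> \<longleftrightarrow> chip_le (Th (N + m)) z \<gamma>" if z: "z \<in> Sf (Suc m)" for z
    proof -
      have zm: "z \<in> Sf m" using z eq trunc_all_sub[of "Th (N+m)" "csof (bb (N+m))" "Sf m"]
        unfolding Rfof_def by blast
      have "z \<in> set (Th (N+m))" using sub_n[OF fV(1)[of m]] zm by blast
      moreover have "z \<in> set (Th (Suc (N+m)))" using sub_n[OF fV(1)[of "Suc m"]] z by auto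
      moreover have "\<gamma> \<in> set (Th (N+m))" using sub_n[OF fV(1)[of m]] fV(2)[of m] by blast
      moreover have "\<gamma> \<in> set (Th (Suc (N+m)))" using sub_n[OF fV(1)[of "Suc m"]] fV(2)[of "Suc m"] by auto
      ultimately show ?thesis using ord_keep_n[of z "N+m" \<gamma>] by simp
    qed
    show ?case
    proof (cases "m = n1")
      case True
      have "\<gamma> \<in> set (csof (bb (N+m)))"
        using cv True gstep.cs_covered[OF gs] by blast
      then have "chip_le (Th (N+m)) z \<gamma>" if "z \<in> Sf (Suc m)" for z
        using trunc_all_top[of \<gamma> "csof (bb (N+m))" "Th (N+m)" "Sf m" z] eq fV(2)[of "Suc m"] that
        unfolding Rfof_def by simp
      then show ?thesis using ord by blast
    next
      case False
      then have "n1 < m" using Suc.prems by simp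
      then have ih: "\<forall>z\<in>Sf m. chip_le (Th (N+m)) z \<gamma>" using Suc.IH Suc.prems by simp
      have "chip_le (Th (N+m)) z \<gamma>" if "z \<in> Sf (Suc m)" for z
      proof -
        have "z \<in> Sf m" using that eq trunc_all_sub[of "Th (N+m)" "csof (bb (N+m))" "Sf m"]
          unfolding Rfof_def by blast
        then show ?thesis using ih by blast
      qed
      then show ?thesis using ord by blast
    qed
  qed
  have infCr: "\<exists>n\<ge>M0. Cr n" for M0
  proof -
    obtain t1 where t1: "t1 \<ge> N + M0" "covered (bb t1) \<gamma>"
      using inf_unb[OF cov, of "N + M0"] by blast
    obtain t2 where t2: "t2 \<ge> Suc t1" "covered (bb t2) \<gamma>"
      using inf_unb[OF cov, of "Suc t1"] by blast
    define n1 where "n1 = t1 - N"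
    define n2 where "n2 = t2 - N"
    have e1: "t1 = N + n1" and e2: "t2 = N + n2" and lt: "n1 < n2" using t1 t2 unfolding n1_def n2_def by auto
    show ?thesis
    proof (rule ccontr)
      assume "\<not> (\<exists>n\<ge>M0. Cr n)"
      then have "\<forall>j. n1 \<le> j \<and> j < n2 \<longrightarrow> \<not> Cr j" using t1(1) e1 by auto
      then have all: "\<forall>z\<in>Sf n2. chip_le (Th (N+n2)) z \<gamma>" using below[of n1 n2] t1(2) e1 lt by simp
      have "is_top (Th (N+n2)) (Sf n2) \<gamma>" unfolding is_top_def using all fV(2) by blast
      then show False using t2(2) e2 fV(1)[of n2] unfolding covered_def by blast
    qed
  qed
  obtain e where e: "strict_mono e" "\<forall>i. Cr (e i)" "\<forall>i m. e i < m \<and> m < e (Suc i) \<longrightarrow> \<not> Cr m"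
    using inf_enum[of Cr] infCr by blast
  define kk where "kk i = N + (e i + 1)" for i
  define sq where "sq i = xf (e i + 1)" for i
  have smk: "strict_mono kk" using e(1) unfolding kk_def strict_mono_def by simp
  have dm: "sq i \<in> mdom (\<tau> (kk i))" for i
    using dom_n[OF fV(1)[of "e i + 1"]] unfolding sq_def kk_def .
  have seg: "(sq i, \<alpha>, sq (Suc i)) \<in> Pcomp \<tau> (kk i) (kk (Suc i))" for i
  proof -
    define p where "p = e i + 1"
    define d where "d = e (Suc i) - e i - 1"
    have lt: "e i < e (Suc i)" using e(1) unfolding strict_mono_def by simp
    have pd: "p + d = e (Suc i)" unfolding p_def d_def using lt by simp
    have pc: "Pcomp \<tau> (kk i) (kk (Suc i)) = Pp (\<lambda>t. \<tau> (N + t)) p d"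
      unfolding Pcomp_def kk_def p_def d_def Pp_shift[symmetric] by simp
    have path: "(xf p, Jf cf p d, xf (p+d+1)) \<in> Pp (\<lambda>t. \<tau> (N + t)) p d"
      by (rule Pp_path) (use cfE in simp)
    have lab: "sup (af (p+j)) (cf (p+j)) = Jf cf p j" if "j \<le> d" for j
      using that
    proof (induction j)
      case 0
      have "af p = bot" using yCr[of "e i"] e(2) unfolding p_def by simp
      then show ?case by simp
    next
      case (Suc j)
      have "e i < p + j" "p + j < e (Suc i)" using Suc.prems pd unfolding p_def by auto
      then have "\<not> Cr (p + j)" using e(3) by blast
      then have "af (Suc (p + j)) = sup (af (p+j)) (cf (p+j))" using nCr by blast
      then have "af (p + Suc j) = Jf cf p j" using Suc by simp
      then show ?case by simp
    qed
    have "Jf cf p d = \<alpha>" using lab[of d] e(2) pd unfolding Cr_def by simp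
    moreover have "xf p = sq i" unfolding sq_def p_def by simp
    moreover have "xf (p+d+1) = sq (Suc i)" unfolding sq_def using pd by simp
    ultimately show ?thesis using path pc by simp
  qed
  show ?thesis unfolding trace_cond_def using smk dm seg by blast
qed

end


lemma noninc_stab:
  fixes f :: "nat \<Rightarrow> nat"
  assumes "\<forall>t. f (Suc t) \<le> f t"
  shows "\<exists>N. \<forall>t\<ge>N. f t = f N"
proof -
  have mono: "f (n + j) \<le> f n" for n j
  proof (induction j)
    case (Suc j)
    have "f (Suc (n+j)) \<le> f (n+j)" using assms by blast
    then show ?case using Suc by simp
  qed simp
  have fin: "finite (range f)"
  proof (rule finite_subset[of _ "{..f 0}"])
    show "range f \<subseteq> {..f 0}" using mono[of 0] by auto
  qed simp
  obtain N where N: "f N = Min (range f)"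
    using Min_in[OF fin] by auto
  have "f t = f N" if "t \<ge> N" for t
  proof -
    have "f t \<le> f N" using mono[of N "t - N"] that by simp
    moreover have "f N \<le> f t" using N Min_le[OF fin] by simp
    ultimately show ?thesis by simp
  qed
  then show ?thesis by blast
qed

locale srun_tr = srun \<alpha> Ob S M ch g \<tau>
  for \<alpha> :: "'a::{finite,bounded_semilattice_sup_bot}" and Ob :: "'x set set" and S :: "'x set"
    and M :: "('x,'a) morph set" and ch :: "nat \<Rightarrow> 'c::countable"
    and g :: "('x,'a) morph \<Rightarrow> ('c,'x,'a) board \<Rightarrow> ('c,'x,'a) board" and \<tau> :: "nat \<Rightarrow> ('x,'a) morph" +
  fixes k0 :: nat and X :: "nat \<Rightarrow> 'x" and C :: "nat \<Rightarrow> 'a" and lab :: "nat \<Rightarrow> 'a"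
  assumes edge: "t \<ge> k0 \<Longrightarrow> (X t, C t, X (Suc t)) \<in> mrel (\<tau> t)"
    and lab0: "lab k0 = bot"
    and labS: "t \<ge> k0 \<Longrightarrow> lab (Suc t) = (if sup (lab t) (C t) = \<alpha> then bot else sup (lab t) (C t))"
    and X0: "X k0 \<in> mdom (\<tau> k0)"
    and infCr: "\<exists>t\<ge>M0. sup (lab t) (C t) = \<alpha>"
begin

definition "Cr t \<longleftrightarrow> sup (lab t) (C t) = \<alpha>"

lemma NE: "sg2 (k0 + j) (X (k0 + j)) (lab (k0 + j)) \<noteq> {} \<and> (j > 0 \<longrightarrow> sg (k0 + j) (X (k0 + j)) (lab (k0 + j)) \<noteq> {})"
proof (induction j)
  case 0
  interpret s: gstep \<alpha> ch K "\<tau> k0" "bb k0" "bb (Suc k0)" by (rule gs)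
  show ?case using s.sg2_bot[OF X0] lab0 by simp
next
  case (Suc j)
  define t where "t = k0 + j"
  interpret s: gstep \<alpha> ch K "\<tau> t" "bb t" "bb (Suc t)" by (rule gs)
  interpret s1: gstep \<alpha> ch K "\<tau> (Suc t)" "bb (Suc t)" "bb (Suc (Suc t))" by (rule gs)
  obtain S0 where S0: "S0 \<in> sg2 t (X t) (lab t)" using Suc.IH unfolding t_def by blast
  have ed: "(X t, C t, X (Suc t)) \<in> mrel (\<tau> t)" using edge unfolding t_def by simp
  have "s.sg3 (X (Suc t)) (lab (Suc t)) \<noteq> {}"
  proof (cases "sup (lab t) (C t) = \<alpha>")
    case True
    then show ?thesis using s.fwd[OF S0 ed] labS[of t] unfolding t_def by auto
  next
    case False
    then show ?thesis using s.fwd[OF S0 ed] labS[of t] unfolding t_def by auto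
  qed
  then have "sg (Suc t) (X (Suc t)) (lab (Suc t)) \<noteq> {}" using s.sg'_ne by blast
  moreover then have "sg2 (Suc t) (X (Suc t)) (lab (Suc t)) \<noteq> {}" using s1.sg2_ne by blast
  ultimately show ?case unfolding t_def by simp
qed

lemma NE1: "t > k0 \<Longrightarrow> sg t (X t) (lab t) \<noteq> {}"
  using NE[of "t - k0"] by simp

lemma NE2: "t \<ge> k0 \<Longrightarrow> sg2 t (X t) (lab t) \<noteq> {}"
  using NE[of "t - k0"] by simp

definition T where "T t = (SOME St. St \<in> sg t (X t) (lab t))"

lemma T_in: "t > k0 \<Longrightarrow> T t \<in> sg t (X t) (lab t)"
  unfolding T_def using NE1 by (meson ex_in_conv someI_ex)

lemma T_uniq: "t > k0 \<Longrightarrow> St \<in> sg t (X t) (lab t) \<Longrightarrow> St = T t"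
  using T_in sing_n by blast

lemma T_sub: "t > k0 \<Longrightarrow> T t \<subseteq> set (Th t)"
  using T_in sub_n by blast

definition T' where "T' t = (if Cr t then insert (iot t (X (Suc t))) (Rf t (T t)) else Rf t (T t))"

lemma T'_prop:
  assumes "t > k0"
  shows "T' t \<in> sg3 t (X (Suc t)) (lab (Suc t)) \<and> (T (Suc t) = T' t \<or> stack_less (Th3 t) (T (Suc t)) (T' t))"
proof -
  interpret s: gstep \<alpha> ch K "\<tau> t" "bb t" "bb (Suc t)" by (rule gs)
  have S0: "Rf t (T t) \<in> sg2 t (X t) (lab t)" using s.sg2_of T_in assms by blast
  have ed: "(X t, C t, X (Suc t)) \<in> mrel (\<tau> t)" using edge assms by simp
  have in3: "T' t \<in> sg3 t (X (Suc t)) (lab (Suc t))"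
  proof (cases "Cr t")
    case True
    then show ?thesis using s.fwd[OF S0 ed] labS[of t] assms unfolding T'_def Cr_def by auto
  next
    case False
    then show ?thesis using s.fwd[OF S0 ed] labS[of t] assms unfolding T'_def Cr_def by auto
  qed
  have "T (Suc t) \<in> sg (Suc t) (X (Suc t)) (lab (Suc t))" using T_in assms by simp
  then have "\<forall>S'\<in>sg3 t (X (Suc t)) (lab (Suc t)). S' \<noteq> T (Suc t) \<longrightarrow> stack_less (Th3 t) (T (Suc t)) S'"
    using s.sg'_elem by blast
  then show ?thesis using in3 by blast
qed

lemma T'_old:
  assumes "t > k0"
  shows "Rf t (T t) \<subseteq> set (old3 t)"
proof -
  interpret s: gstep \<alpha> ch K "\<tau> t" "bb t" "bb (Suc t)" by (rule gs)
  have S0: "Rf t (T t) \<in> sg2 t (X t) (lab t)" using s.sg2_of T_in assms by blast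
  have ed: "(X t, C t, X (Suc t)) \<in> mrel (\<tau> t)" using edge assms by simp
  have "Rf t (T t) \<in> s.ss (X (Suc t)) (sup (lab t) (C t))" using S0 ed s.ss_elem by blast
  then show ?thesis using s.ss_sub by blast
qed

lemma T'_new:
  assumes "t > k0" "Cr t"
  shows "iot t (X (Suc t)) \<in> set (Ton t)"
proof -
  interpret s: gstep \<alpha> ch K "\<tau> t" "bb t" "bb (Suc t)" by (rule gs)
  have S0: "Rf t (T t) \<in> sg2 t (X t) (lab t)" using s.sg2_of T_in assms by blast
  have ed: "(X t, C t, X (Suc t)) \<in> mrel (\<tau> t)" using edge assms by simp
  have "sup (lab t) (C t) = \<alpha>" using assms(2) unfolding Cr_def .
  then have "Rf t (T t) \<in> s.ss (X (Suc t)) \<alpha>" using S0 ed s.ss_elem[of "Rf t (T t)" "X (Suc t)" \<alpha>] by blast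
  then show ?thesis using s.iota_in by blast
qed

definition Pref where
  "Pref N P \<longleftrightarrow> (\<forall>t\<ge>N. P \<subseteq> T t \<and> (\<forall>z\<in>T t. \<forall>p\<in>P. chip_le (Th t) z p \<longrightarrow> z \<in> P))"

definition U where "U P t = T t - P"

definition A where "A P t = {z \<in> set (Th t). \<forall>w\<in>U P t. chip_le (Th t) z w}"

definition umin where "umin P t = (SOME u. u \<in> U P t \<and> (\<forall>w\<in>U P t. chip_le (Th t) u w))"

lemma umin_prop:
  assumes "t > k0" "U P t \<noteq> {}"
  shows "umin P t \<in> U P t \<and> (\<forall>w\<in>U P t. chip_le (Th t) (umin P t) w)"
proof -
  have sub: "U P t \<subseteq> set (Th t)" using T_sub assms(1) unfolding U_def by blast
  have fin: "finite (U P t)" using sub finite_subset by blast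
  obtain u where "u \<in> U P t" "\<forall>w\<in>U P t. chip_le (Th t) u w"
    using least_exists[OF fin assms(2) sub dist_n] by blast
  then show ?thesis unfolding umin_def by (rule someI[where P="\<lambda>u. u \<in> U P t \<and> (\<forall>w\<in>U P t. chip_le (Th t) u w)", OF conjI])
qed

lemma P_below:
  assumes "Pref N P" "t \<ge> N" "t > k0" "p \<in> P" "w \<in> U P t"
  shows "chip_le (Th t) p w"
proof -
  have pT: "p \<in> T t" using assms unfolding Pref_def by blast
  have wT: "w \<in> T t" "w \<notin> P" using assms(5) unfolding U_def by auto
  have "p \<in> set (Th t)" "w \<in> set (Th t)" using pT wT T_sub assms(3) by blast+
  then have "chip_le (Th t) p w \<or> chip_le (Th t) w p" using cle_total[of p "Th t" w] by blast
  moreover have "\<not> chip_le (Th t) w p" using assms(1,2,4) wT unfolding Pref_def by blast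
  ultimately show ?thesis by blast
qed

lemma keep:
  assumes pref: "Pref N P" and t: "t \<ge> N" "t > k0" and nocov: "\<forall>p\<in>P. \<not> covered (bb t) p"
  shows "P \<subseteq> Rf t (T t) \<and> (U P t \<noteq> {} \<longrightarrow> umin P t \<in> Rf t (T t))"
proof -
  interpret s: gstep \<alpha> ch K "\<tau> t" "bb t" "bb (Suc t)" by (rule gs)
  have PT: "P \<subseteq> T t" using pref t unfolding Pref_def by blast
  have epsU: "\<epsilon> \<in> U P t" if "\<epsilon> \<in> set (csof (bb t))" "\<epsilon> \<in> T t" for \<epsilon>
  proof -
    have "covered (bb t) \<epsilon>" using that s.cs_covered by blast
    then have "\<epsilon> \<notin> P" using nocov by blast
    then show ?thesis using that unfolding U_def by blast
  qed
  have 1: "P \<subseteq> Rf t (T t)" if "U P t = {}"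
    unfolding Rfof_def by (rule trunc_all_keep[OF PT]) (use epsU that in blast)
  have 2: "insert (umin P t) P \<subseteq> Rf t (T t)" if ne: "U P t \<noteq> {}"
  proof -
    have um: "umin P t \<in> U P t" "\<forall>w\<in>U P t. chip_le (Th t) (umin P t) w" using umin_prop[OF t(2) ne] by blast+
    have CT: "insert (umin P t) P \<subseteq> T t" using PT um(1) unfolding U_def by blast
    show ?thesis unfolding Rfof_def
    proof (rule trunc_all_keep[OF CT], intro ballI impI)
      fix \<epsilon> c assume e: "\<epsilon> \<in> set (csof (bb t))" "\<epsilon> \<in> T t" and c: "c \<in> insert (umin P t) P"
      have eU: "\<epsilon> \<in> U P t" using epsU[OF e] .
      have ue: "chip_le (Th t) (umin P t) \<epsilon>" using um(2) eU by blast
      show "chip_le (Th t) c \<epsilon>"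
      proof (cases "c = umin P t")
        case True then show ?thesis using ue by simp
      next
        case False
        then have "c \<in> P" using c by simp
        then have "chip_le (Th t) c (umin P t)" using P_below[OF pref t(1) t(2) _ um(1)] by blast
        then show ?thesis using ue cle_trans[OF dist_n] by blast
      qed
    qed
  qed
  show ?thesis using 1 2 by blast
qed

lemma P_notnew:
  assumes "Pref N P" "t \<ge> N" "t > k0"
  shows "P \<inter> set (Ton t) = {}"
proof -
  interpret s: gstep \<alpha> ch K "\<tau> t" "bb t" "bb (Suc t)" by (rule gs)
  have "P \<subseteq> T t" "P \<subseteq> T (Suc t)" using assms unfolding Pref_def by auto
  moreover have "T t \<subseteq> set (Th t)" using T_sub assms(3) by blast
  moreover have "T (Suc t) \<subseteq> set (Th (Suc t))" using T_sub[of "Suc t"] assms(3) by simp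
  ultimately have "P \<subseteq> set (Th t)" "P \<subseteq> set (Th (Suc t))" by blast+
  then show ?thesis using s.inter by blast
qed

lemma Ustep:
  assumes pref: "Pref N P" and t: "t \<ge> N" "t > k0" and nocov: "\<forall>p\<in>P. \<not> covered (bb t) p"
    and ne: "U P t \<noteq> {} \<or> Cr t"
  shows "U P (Suc t) \<noteq> {}"
proof -
  interpret s: gstep \<alpha> ch K "\<tau> t" "bb t" "bb (Suc t)" by (rule gs)
  have kp: "P \<subseteq> Rf t (T t) \<and> (U P t \<noteq> {} \<longrightarrow> umin P t \<in> Rf t (T t))" by (rule keep[OF pref t nocov])
  have PT': "P \<subseteq> T' t" using kp unfolding T'_def by auto
  have ex: "\<exists>z. z \<in> T' t \<and> z \<notin> P"
  proof (cases "Cr t")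
    case True
    have "iot t (X (Suc t)) \<in> T' t" unfolding T'_def using True by simp
    moreover have "iot t (X (Suc t)) \<notin> P" using T'_new[OF t(2) True] P_notnew[OF pref t] by blast
    ultimately show ?thesis by blast
  next
    case False
    then have "U P t \<noteq> {}" using ne by simp
    then have "umin P t \<in> T' t" "umin P t \<notin> P"
      using kp umin_prop[OF t(2)] False unfolding T'_def U_def by auto
    then show ?thesis by blast
  qed
  show ?thesis
  proof
    assume U0: "U P (Suc t) = {}"
    have "P \<subseteq> T (Suc t)" using pref t unfolding Pref_def by simp
    then have TP: "T (Suc t) = P" using U0 unfolding U_def by blast
    have "T (Suc t) \<noteq> T' t" using ex TP by blast
    then have "stack_less (Th3 t) P (T' t)" using T'_prop[OF t(2)] TP by metis
    then obtain d where "d \<in> (P - T' t) \<union> (T' t - P)" "d \<in> P" unfolding stack_less_def by blast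
    then show False using PT' by blast
  qed
qed

lemma umin_dec:
  assumes pref: "Pref N P" and t: "t \<ge> N" "t > k0" and nocov: "\<forall>p\<in>P. \<not> covered (bb t) p"
    and ne: "U P t \<noteq> {}"
  shows "U P (Suc t) \<noteq> {} \<and> chip_le (Th3 t) (umin P (Suc t)) (umin P t)"
proof -
  interpret s: gstep \<alpha> ch K "\<tau> t" "bb t" "bb (Suc t)" by (rule gs)
  have ne1: "U P (Suc t) \<noteq> {}" using Ustep[OF pref t nocov] ne by blast
  have kp: "P \<subseteq> Rf t (T t) \<and> (U P t \<noteq> {} \<longrightarrow> umin P t \<in> Rf t (T t))" by (rule keep[OF pref t nocov])
  have PT': "P \<subseteq> T' t" using kp unfolding T'_def by auto
  define u where "u = umin P t"
  define u1 where "u1 = umin P (Suc t)"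
  have uT': "u \<in> T' t" "u \<notin> P" using kp ne umin_prop[OF t(2) ne] unfolding T'_def U_def u_def by auto
  have t1: "Suc t > k0" using t by simp
  have um1: "u1 \<in> U P (Suc t)" "\<forall>w\<in>U P (Suc t). chip_le (Th (Suc t)) u1 w"
    using umin_prop[OF t1 ne1] unfolding u1_def by blast+
  have toTh3: "chip_le (Th3 t) u1 w" if "w \<in> U P (Suc t)" for w
  proof -
    have "u1 \<in> set (Th (Suc t))" "w \<in> set (Th (Suc t))" using um1(1) that T_sub[OF t1] unfolding U_def by blast+
    moreover have "chip_le (Th (Suc t)) u1 w" using um1(2) that by blast
    ultimately show ?thesis using s.ord_new by blast
  qed
  have "chip_le (Th3 t) u1 u"
  proof (cases "u \<in> T (Suc t)")
    case True
    then have "u \<in> U P (Suc t)" using uT' unfolding U_def by blast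
    then show ?thesis using toTh3 by blast
  next
    case False
    then have "T (Suc t) \<noteq> T' t" using uT' by blast
    then have sl: "stack_less (Th3 t) (T (Suc t)) (T' t)" using T'_prop[OF t(2)] by metis
    then obtain d where d: "d \<in> (T (Suc t) - T' t) \<union> (T' t - T (Suc t))" "d \<in> T (Suc t)"
      "\<forall>e \<in> (T (Suc t) - T' t) \<union> (T' t - T (Suc t)). chip_le (Th3 t) d e" unfolding stack_less_def by blast
    have "u \<in> (T (Suc t) - T' t) \<union> (T' t - T (Suc t))" using False uT' by blast
    then have du: "chip_le (Th3 t) d u" using d(3) by blast
    have "d \<notin> T' t" using d(1,2) by blast
    then have "d \<notin> P" using PT' by blast
    then have "d \<in> U P (Suc t)" using d(2) unfolding U_def by blast
    then have "chip_le (Th3 t) u1 d" using toTh3 by blast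
    then show ?thesis using du cle_trans[OF s.dist3] by blast
  qed
  then show ?thesis using ne1 unfolding u_def u1_def by blast
qed

lemma A_dec:
  assumes pref: "Pref N P" and t: "t \<ge> N" "t > k0" and nocov: "\<forall>p\<in>P. \<not> covered (bb t) p"
    and ne: "U P t \<noteq> {}"
  shows "A P (Suc t) \<subseteq> A P t"
proof
  interpret s: gstep \<alpha> ch K "\<tau> t" "bb t" "bb (Suc t)" by (rule gs)
  fix z assume z: "z \<in> A P (Suc t)"
  have ud: "U P (Suc t) \<noteq> {}" "chip_le (Th3 t) (umin P (Suc t)) (umin P t)"
    using umin_dec[OF pref t nocov ne] by blast+
  have t1: "Suc t > k0" using t by simp
  have um1: "umin P (Suc t) \<in> U P (Suc t)" using umin_prop[OF t1 ud(1)] by blast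
  have um: "umin P t \<in> U P t" "\<forall>w\<in>U P t. chip_le (Th t) (umin P t) w" using umin_prop[OF t(2) ne] by blast+
  have zs: "z \<in> set (Th (Suc t))" "chip_le (Th (Suc t)) z (umin P (Suc t))" using z um1 unfolding A_def by blast+
  have "umin P (Suc t) \<in> set (Th (Suc t))" using um1 T_sub[OF t1] unfolding U_def by blast
  then have "chip_le (Th3 t) z (umin P (Suc t))" using zs s.ord_new by blast
  then have z3: "chip_le (Th3 t) z (umin P t)" using ud(2) cle_trans[OF s.dist3] by blast
  have kp: "umin P t \<in> Rf t (T t)" using keep[OF pref t nocov] ne by blast
  then have uo: "umin P t \<in> set (old3 t)" using T'_old[OF t(2)] by blast
  have zo: "z \<in> set (old3 t)" using s.ord_below[OF z3 uo] .
  have "chip_le (Th t) z (umin P t)" using s.ord_old[OF zo uo] z3 by blast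
  moreover have "z \<in> set (Th t)" using zo s.old3_sub by blast
  ultimately show "z \<in> A P t" unfolding A_def using um(2) cle_trans[OF dist_n] by blast
qed

lemma Pref_mono: "Pref N P \<Longrightarrow> N \<le> N' \<Longrightarrow> Pref N' P"
  unfolding Pref_def by (meson le_trans)

lemma extend:
  assumes pref: "Pref N P" and N: "N > k0" and nocov: "\<forall>t\<ge>N. \<forall>p\<in>P. \<not> covered (bb t) p"
  shows "\<exists>N' u. N' \<ge> N \<and> u \<notin> P \<and> Pref N' (insert u P)"
proof -
  obtain tc where tc: "tc \<ge> N" "Cr tc" using infCr[of N] unfolding Cr_def by blast
  have Une: "U P t \<noteq> {}" if "t \<ge> Suc tc" for t
    using that
  proof (induction t)
    case 0 then show ?case by simp
  next
    case (Suc t)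
    show ?case
    proof (cases "t = tc")
      case True
      then show ?thesis using Ustep[OF pref _ _ _] tc nocov N by auto
    next
      case False
      then have "t \<ge> Suc tc" using Suc.prems by simp
      then have "U P t \<noteq> {}" using Suc.IH by blast
      then show ?thesis using Ustep[OF pref _ _ _] tc nocov N \<open>t \<ge> Suc tc\<close> by auto
    qed
  qed
  define N2 where "N2 = Suc tc"
  have N2: "N2 \<ge> N" "N2 > k0" using tc N unfolding N2_def by auto
  have finA: "finite (A P t)" for t unfolding A_def by simp
  have Adec: "A P (Suc t) \<subseteq> A P t" if "t \<ge> N2" for t
    using A_dec[OF pref _ _ _ Une] that N2 nocov unfolding N2_def by auto
  have "\<forall>j. card (A P (N2 + Suc j)) \<le> card (A P (N2 + j))"
    using Adec card_mono finA by (metis add_Suc_right le_add1)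
  then obtain J where J: "\<forall>j\<ge>J. card (A P (N2 + j)) = card (A P (N2 + J))"
    using noninc_stab[of "\<lambda>j. card (A P (N2 + j))"] by blast
  define N3 where "N3 = N2 + J"
  have N3: "N3 \<ge> N" "N3 > k0" using N2 unfolding N3_def by auto
  have Aeq: "A P (Suc t) = A P t" if "t \<ge> N3" for t
  proof -
    have "card (A P (Suc t)) = card (A P t)"
      using J[rule_format, of "t - N2"] J[rule_format, of "Suc t - N2"] that unfolding N3_def
      by (simp add: Suc_diff_le)
    then show ?thesis using card_seteq[OF finA Adec] that N3_def by (simp add: le_Suc_eq N3_def)
  qed
  have ustab: "umin P (Suc t) = umin P t" if "t \<ge> N3" for t
  proof -
    interpret s: gstep \<alpha> ch K "\<tau> t" "bb t" "bb (Suc t)" by (rule gs)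
    have t: "t \<ge> N" "t > k0" using that N3 by auto
    have ne: "U P t \<noteq> {}" using Une that unfolding N3_def N2_def by simp
    have nc: "\<forall>p\<in>P. \<not> covered (bb t) p" using nocov t by blast
    have ud: "U P (Suc t) \<noteq> {}" "chip_le (Th3 t) (umin P (Suc t)) (umin P t)"
      using umin_dec[OF pref t nc ne] by auto
    have t1: "Suc t > k0" using t by simp
    have um: "umin P t \<in> U P t" "\<forall>w\<in>U P t. chip_le (Th t) (umin P t) w" using umin_prop[OF t(2) ne] by blast+
    have um1: "umin P (Suc t) \<in> U P (Suc t)" using umin_prop[OF t1 ud(1)] by blast
    have "umin P t \<in> A P t" unfolding A_def using um T_sub[OF t(2)] unfolding U_def by blast
    then have "umin P t \<in> A P (Suc t)" using Aeq[OF that] by simp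
    then have a: "umin P t \<in> set (Th (Suc t))" "chip_le (Th (Suc t)) (umin P t) (umin P (Suc t))"
      using um1 unfolding A_def by blast+
    have "umin P (Suc t) \<in> set (Th (Suc t))" using um1 T_sub[OF t1] unfolding U_def by blast
    then have "chip_le (Th3 t) (umin P t) (umin P (Suc t))" using a s.ord_new by blast
    then show ?thesis using ud(2) cle_antisym[OF s.dist3] by blast
  qed
  define u where "u = umin P N3"
  have uall: "umin P t = u" if "t \<ge> N3" for t
    using that
  proof (induction t)
    case 0 then show ?case unfolding u_def by simp
  next
    case (Suc t)
    show ?case
    proof (cases "Suc t = N3")
      case True then show ?thesis unfolding u_def by simp
    next
      case False
      then have "t \<ge> N3" using Suc.prems by simp
      then show ?thesis using ustab Suc.IH by simp
    qed
  qed
  have uU: "u \<in> U P t" "\<forall>w\<in>U P t. chip_le (Th t) u w" if "t \<ge> N3" for t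
  proof -
    have ne: "U P t \<noteq> {}" using Une that unfolding N3_def N2_def by simp
    have "t > k0" using that N3 by simp
    then show "u \<in> U P t" "\<forall>w\<in>U P t. chip_le (Th t) u w" using umin_prop[OF _ ne] uall[OF that] by blast+
  qed
  have "u \<notin> P" using uU(1)[of N3] unfolding U_def by blast
  moreover have "Pref N3 (insert u P)"
    unfolding Pref_def
  proof (intro allI impI conjI ballI)
    fix t assume t: "t \<ge> N3"
    have tk: "t > k0" using t N3 by simp
    show "insert u P \<subseteq> T t" using uU(1)[OF t] pref t N3 unfolding U_def Pref_def by auto
    fix z p assume z: "z \<in> T t" and p: "p \<in> insert u P" and zp: "chip_le (Th t) z p"
    show "z \<in> insert u P"
    proof (cases "p = u")
      case False
      then have "p \<in> P" using p by simp
      have tN: "t \<ge> N" using t N3 by simp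
      have "\<forall>z\<in>T t. \<forall>p\<in>P. chip_le (Th t) z p \<longrightarrow> z \<in> P" using pref tN unfolding Pref_def by blast
      then have "z \<in> P" using \<open>p \<in> P\<close> z zp by blast
      then show ?thesis by simp
    next
      case True
      show ?thesis
      proof (cases "z \<in> P")
        case False
        then have "z \<in> U P t" using z unfolding U_def by simp
        then have "chip_le (Th t) u z" using uU(2)[OF t] by blast
        then have "z = u" using zp True cle_antisym[OF dist_n] by blast
        then show ?thesis by simp
      qed simp
    qed
  qed
  ultimately show ?thesis using N3 by blast
qed

end


context srun_tr
begin

lemma accept:
  "\<exists>\<gamma>\<in>Kbar ch K (card (UNIV :: 'a set)). infinite {n. covered (bb n) \<gamma>} \<and> finite {n. \<gamma> \<notin> set (Th n)}"
proof (rule ccontr)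
  assume na: "\<not> (\<exists>\<gamma>\<in>Kbar ch K (card (UNIV :: 'a set)). infinite {n. covered (bb n) \<gamma>} \<and> finite {n. \<gamma> \<notin> set (Th n)})"
  have it: "\<exists>N P. N > k0 \<and> Pref N P \<and> finite P \<and> card P = j" for j
  proof (induction j)
    case 0
    have "Pref (Suc k0) {}" unfolding Pref_def by simp
    then show ?case by (intro exI[of _ "Suc k0"] exI[of _ "{}"]) simp
  next
    case (Suc j)
    then obtain N P where NP: "N > k0" "Pref N P" "finite P" "card P = j" by blast
    have PTh: "p \<in> set (Th t)" if "p \<in> P" "t \<ge> N" for p t
    proof -
      have "P \<subseteq> T t" using NP(2) that(2) unfolding Pref_def by blast
      moreover have "T t \<subseteq> set (Th t)" using T_sub NP(1) that(2) by simp
      ultimately show ?thesis using that(1) by blast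
    qed
    have fincov: "finite {n. covered (bb n) p}" if p: "p \<in> P" for p
    proof -
      have "{n. p \<notin> set (Th n)} \<subseteq> {..<N}" using PTh[OF p] by (auto simp: not_less[symmetric])
      then have f1: "finite {n. p \<notin> set (Th n)}" using finite_subset by blast
      have "p \<in> Kbar ch K (card (UNIV :: 'a set))" using PTh[OF p, of N] Kb_n by blast
      then show ?thesis using na f1 by blast
    qed
    have "finite (\<Union>p\<in>P. {n. covered (bb n) p})" using NP(3) fincov by blast
    then obtain B where B: "\<forall>n\<in>(\<Union>p\<in>P. {n. covered (bb n) p}). n < B" using finite_nat_set_iff_bounded by blast
    define N1 where "N1 = max N B"
    have nocov: "\<forall>t\<ge>N1. \<forall>p\<in>P. \<not> covered (bb t) p" using B unfolding N1_def by force
    have pref1: "Pref N1 P" using Pref_mono[OF NP(2)] unfolding N1_def by simp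
    have "N1 > k0" using NP(1) unfolding N1_def by simp
    then obtain N' u where "N' \<ge> N1" "u \<notin> P" "Pref N' (insert u P)" using extend[OF pref1 _ nocov] by blast
    moreover have "N' > k0" using \<open>N' \<ge> N1\<close> \<open>N1 > k0\<close> by simp
    moreover have "finite (insert u P)" "card (insert u P) = Suc j" using NP(3,4) \<open>u \<notin> P\<close> by simp_all
    ultimately show ?case by blast
  qed
  obtain N P where NP: "N > k0" "Pref N P" "finite P" "card P = Suc (K * card (UNIV :: 'a set))"
    using it by blast
  have "P \<subseteq> T N" using NP(2) unfolding Pref_def by simp
  then have "P \<subseteq> set (Th N)" using T_sub NP(1) by blast
  then have "card P \<le> card (set (Th N))" by (simp add: card_mono)
  also have "\<dots> \<le> length (Th N)" by (rule card_length)
  also have "\<dots> \<le> K * card (UNIV :: 'a set)" by (rule len_n)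
  finally show False using NP(4) by simp
qed

end

context srun
begin

lemma complete:
  assumes tc: "trace_cond \<alpha> \<tau>"
  shows "\<exists>\<gamma>\<in>Kbar ch K (card (UNIV :: 'a set)). infinite {n. covered (bb n) \<gamma>} \<and> finite {n. \<gamma> \<notin> set (Th n)}"
proof -
  obtain k :: "nat \<Rightarrow> nat" and s :: "nat \<Rightarrow> 'x" where k: "strict_mono k"
    and sd: "\<And>i. s i \<in> mdom (\<tau> (k i))" and sseg: "\<And>i. (s i, \<alpha>, s (Suc i)) \<in> Pcomp \<tau> (k i) (k (Suc i))"
    using tc unfolding trace_cond_def by blast
  define dd where "dd i = k (Suc i) - k i - 1" for i
  have kS: "k (Suc i) = k i + dd i + 1" for i
  proof -
    have "k i < k (Suc i)" using k unfolding strict_mono_def by simp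
    then show ?thesis unfolding dd_def by arith
  qed
  have "\<forall>i. \<exists>p. fst p (k i) = s i \<and> fst p (k i + dd i + 1) = s (Suc i) \<and>
      (\<forall>j\<le>dd i. (fst p (k i + j), snd p (k i + j), fst p (k i + j + 1)) \<in> mrel (\<tau> (k i + j))) \<and>
      Jf (snd p) (k i) (dd i) = \<alpha>"
  proof
    fix i
    have "(s i, \<alpha>, s (Suc i)) \<in> Pp \<tau> (k i) (dd i)" using sseg[of i] unfolding Pcomp_def dd_def .
    then obtain xs cs where "xs (k i) = s i" "xs (k i + dd i + 1) = s (Suc i)"
      "\<forall>j\<le>dd i. (xs (k i + j), cs (k i + j), xs (k i + j + 1)) \<in> mrel (\<tau> (k i + j))" "Jf cs (k i) (dd i) = \<alpha>"
      using Pp_dec[where s="s i" and c=\<alpha> and t="s (Suc i)" and \<tau>=\<tau> and n="k i" and d="dd i"] by blast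
    then show "\<exists>p. fst p (k i) = s i \<and> fst p (k i + dd i + 1) = s (Suc i) \<and>
      (\<forall>j\<le>dd i. (fst p (k i + j), snd p (k i + j), fst p (k i + j + 1)) \<in> mrel (\<tau> (k i + j))) \<and>
      Jf (snd p) (k i) (dd i) = \<alpha>" by (intro exI[of _ "(xs, cs)"]) simp
  qed
  then obtain F where F: "\<And>i. fst (F i) (k i) = s i" "\<And>i. fst (F i) (k i + dd i + 1) = s (Suc i)"
    "\<And>i j. j \<le> dd i \<Longrightarrow> (fst (F i) (k i + j), snd (F i) (k i + j), fst (F i) (k i + j + 1)) \<in> mrel (\<tau> (k i + j))"
    "\<And>i. Jf (snd (F i)) (k i) (dd i) = \<alpha>"
    by metis
  define segi where "segi t = (LEAST i. t < k (Suc i))" for t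
  have kge: "i \<le> k i" for i using strict_mono_imp_increasing[OF k] .
  have seg1: "k (segi t) \<le> t \<and> t < k (Suc (segi t))" if "k 0 \<le> t" for t
  proof -
    have ex: "t < k (Suc t)" using kge[of "Suc t"] by simp
    have lt: "t < k (Suc (segi t))" unfolding segi_def by (rule LeastI[of _ t]) (rule ex)
    have "k (segi t) \<le> t"
    proof (cases "segi t")
      case 0 then show ?thesis using that by simp
    next
      case (Suc j)
      then have "j < segi t" by simp
      then have "\<not> t < k (Suc j)" unfolding segi_def by (rule not_less_Least)
      then show ?thesis using Suc by simp
    qed
    then show ?thesis using lt by simp
  qed
  have seg2: "segi t = i" if "k i \<le> t" "t < k (Suc i)" for t i
  proof -
    have le: "segi t \<le> i" unfolding segi_def by (rule Least_le) (rule that(2))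
    have "k 0 \<le> k i" using strict_mono_less_eq[OF k] by simp
    then have s1: "t < k (Suc (segi t))" using seg1 that(1) by simp
    show ?thesis
    proof (rule ccontr)
      assume "segi t \<noteq> i"
      then have "Suc (segi t) \<le> i" using le by simp
      then have "k (Suc (segi t)) \<le> k i" using strict_mono_less_eq[OF k] by blast
      then show False using s1 that(1) by simp
    qed
  qed
  define X where "X t = fst (F (segi t)) t" for t
  define C where "C t = snd (F (segi t)) t" for t
  define k0 where "k0 = k 0"
  define labf where "labf = rec_nat (bot::'a) (\<lambda>j l. if sup l (C (k0 + j)) = \<alpha> then bot else sup l (C (k0 + j)))"
  define lab where "lab t = labf (t - k0)" for t
  have labf0: "labf 0 = bot" and labfS: "labf (Suc j) = (if sup (labf j) (C (k0 + j)) = \<alpha> then bot else sup (labf j) (C (k0 + j)))" for j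
    unfolding labf_def by simp_all
  have kk0: "k0 \<le> k i" for i unfolding k0_def using strict_mono_less_eq[OF k] by simp
  have edge: "(X t, C t, X (Suc t)) \<in> mrel (\<tau> t)" if "t \<ge> k0" for t
  proof -
    define i where "i = segi t"
    have ti: "k i \<le> t" "t < k (Suc i)" using seg1 that unfolding i_def k0_def by auto
    define j where "j = t - k i"
    have tj: "t = k i + j" "j \<le> dd i" using ti kS[of i] unfolding j_def by auto
    have e: "(fst (F i) t, snd (F i) t, fst (F i) (t + 1)) \<in> mrel (\<tau> t)" using F(3)[OF tj(2)] tj(1) by simp
    have Xt: "X t = fst (F i) t" "C t = snd (F i) t" unfolding X_def C_def i_def by simp_all
    have "X (Suc t) = fst (F i) (Suc t)"
    proof (cases "Suc t < k (Suc i)")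
      case True
      then have "segi (Suc t) = i" using seg2 ti by simp
      then show ?thesis unfolding X_def by simp
    next
      case False
      then have st: "Suc t = k (Suc i)" using ti by simp
      have "k (Suc i) < k (Suc (Suc i))" using k unfolding strict_mono_def by simp
      then have "segi (Suc t) = Suc i" using seg2[of "Suc i" "Suc t"] st by simp
      then have "X (Suc t) = s (Suc i)" unfolding X_def using st F(1)[of "Suc i"] by simp
      also have "\<dots> = fst (F i) (k i + dd i + 1)" using F(2) by simp
      also have "\<dots> = fst (F i) (Suc t)" using st kS[of i] by simp
      finally show ?thesis .
    qed
    then show ?thesis using e Xt by simp
  qed
  have Cseg: "Jf C (k i) (dd i) = \<alpha>" for i
  proof -
    have "Jf C (k i) (dd i) = Jf (snd (F i)) (k i) (dd i)"
    proof (rule Jf_cong, intro allI impI)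
      fix j assume "j \<le> dd i"
      then have "segi (k i + j) = i" using seg2 kS[of i] by simp
      then show "C (k i + j) = snd (F i) (k i + j)" unfolding C_def by simp
    qed
    then show ?thesis using F(4) by simp
  qed
  have Cle: "C t \<le> \<alpha>" if "t \<ge> k0" for t
  proof -
    define i where "i = segi t"
    have ti: "k i \<le> t" "t < k (Suc i)" using seg1 that unfolding i_def k0_def by auto
    define j where "j = t - k i"
    have tj: "t = k i + j" "j \<le> dd i" using ti kS[of i] unfolding j_def by auto
    have "C t \<le> Jf C (k i) j" using Jf_ge[of C "k i" j] tj(1) by simp
    also have "\<dots> \<le> Jf C (k i) (dd i)" using Jf_mono[OF tj(2)] .
    finally show ?thesis using Cseg by simp
  qed
  have labS: "lab (Suc t) = (if sup (lab t) (C t) = \<alpha> then bot else sup (lab t) (C t))" if "t \<ge> k0" for t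
  proof -
    have "Suc t - k0 = Suc (t - k0)" using that by simp
    then show ?thesis unfolding lab_def using labfS[of "t - k0"] that by simp
  qed
  have lab0: "lab k0 = bot" unfolding lab_def using labf0 by simp
  have labinv: "lab (k0 + j) \<le> \<alpha> \<and> lab (k0 + j) \<noteq> \<alpha>" for j
  proof (induction j)
    case 0 then show ?case using lab0 alpha by simp
  next
    case (Suc j)
    have "lab (Suc (k0 + j)) = (if sup (lab (k0+j)) (C (k0+j)) = \<alpha> then bot else sup (lab (k0+j)) (C (k0+j)))"
      using labS[of "k0 + j"] by simp
    moreover have "sup (lab (k0+j)) (C (k0+j)) \<le> \<alpha>" using Suc Cle[of "k0 + j"] by simp
    ultimately show ?case using alpha by simp
  qed
  have labinv': "lab t \<le> \<alpha>" "lab t \<noteq> \<alpha>" if "t \<ge> k0" for t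
    using labinv[of "t - k0"] that by simp_all
  have segCr: "\<exists>t. k i \<le> t \<and> t < k (Suc i) \<and> sup (lab t) (C t) = \<alpha>" for i
  proof (rule ccontr)
    assume nc: "\<nexists>t. k i \<le> t \<and> t < k (Suc i) \<and> sup (lab t) (C t) = \<alpha>"
    have cl: "lab (k i + j + 1) = sup (lab (k i)) (Jf C (k i) j)" if "j \<le> dd i" for j
      using that
    proof (induction j)
      case 0
      have "k i < k (Suc i)" using kS[of i] by simp
      then have "sup (lab (k i)) (C (k i)) \<noteq> \<alpha>" using nc by blast
      then show ?case using labS[of "k i"] kk0[of i] by simp
    next
      case (Suc j)
      have t: "k i + Suc j < k (Suc i)" using Suc.prems kS[of i] by simp
      then have n: "sup (lab (k i + Suc j)) (C (k i + Suc j)) \<noteq> \<alpha>" using nc by simp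
      have "lab (Suc (k i + Suc j)) = sup (lab (k i + Suc j)) (C (k i + Suc j))"
        using labS[of "k i + Suc j"] kk0[of i] n by simp
      also have "\<dots> = sup (sup (lab (k i)) (Jf C (k i) j)) (C (k i + Suc j))" using Suc by simp
      also have "\<dots> = sup (lab (k i)) (Jf C (k i) (Suc j))" by (simp add: sup_assoc)
      finally show ?case by simp
    qed
    have "lab (k (Suc i)) = sup (lab (k i)) \<alpha>" using cl[of "dd i"] kS[of i] Cseg[of i] by simp
    also have "\<dots> = \<alpha>" using labinv'(1)[OF kk0[of i]] by (simp add: sup_absorb2)
    finally show False using labinv'(2)[OF kk0[of "Suc i"]] by simp
  qed
  have infCr: "\<exists>t\<ge>M0. sup (lab t) (C t) = \<alpha>" for M0
  proof -
    obtain t where "k M0 \<le> t" "sup (lab t) (C t) = \<alpha>" using segCr[of M0] by blast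
    moreover have "M0 \<le> k M0" by (rule kge)
    ultimately show ?thesis by (intro exI[of _ t]) simp
  qed
  have X0: "X k0 \<in> mdom (\<tau> k0)"
  proof -
    have "segi (k 0) = 0" using seg2[of 0 "k 0"] k unfolding strict_mono_def by simp
    then have "X k0 = s 0" unfolding X_def k0_def using F(1)[of 0] by simp
    then show ?thesis using sd[of 0] unfolding k0_def by simp
  qed
  interpret tr: srun_tr \<alpha> Ob S M ch g \<tau> k0 X C lab
    by (unfold_locales) (use edge lab0 labS X0 infCr in auto)
  show ?thesis using tr.accept .
qed

end

lemma HP: "(\<forall>n. mdom (\<tau> n) = fst (safra_run S g \<tau> n)) \<longleftrightarrow> mdom (\<tau> 0) = S \<and> is_path \<tau>"
proof
  assume h: "\<forall>n. mdom (\<tau> n) = fst (safra_run S g \<tau> n)"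
  have "mdom (\<tau> 0) = S" using h[rule_format, of 0] by simp
  moreover have "is_path \<tau>" unfolding is_path_def using h by simp
  ultimately show "mdom (\<tau> 0) = S \<and> is_path \<tau>" by blast
next
  assume h: "mdom (\<tau> 0) = S \<and> is_path \<tau>"
  show "\<forall>n. mdom (\<tau> n) = fst (safra_run S g \<tau> n)"
  proof
    fix n show "mdom (\<tau> n) = fst (safra_run S g \<tau> n)"
      using h unfolding is_path_def by (cases n) simp_all
  qed
qed

theorem mainTheorem6:
  fixes \<alpha> :: "'a::{finite,bounded_semilattice_sup_bot}"
    and Ob :: "'x set set" and S :: "'x set"
    and M :: "('x,'a) morph set"
    and ch :: "nat \<Rightarrow> 'c::countable"
    and g :: "('x,'a) morph \<Rightarrow> ('c,'x,'a) board \<Rightarrow> ('c,'x,'a) board"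
    and \<tau> :: "nat \<Rightarrow> ('x,'a) morph"
  assumes "\<alpha> \<noteq> bot"
    and "finite Ob" and "\<forall>X\<in>Ob. finite X" and "S \<in> Ob"
    and "\<forall>m\<in>M. is_morph m \<and> mdom m \<in> Ob \<and> mcod m \<in> Ob"
    and "inj ch"
    and "safra_choice \<alpha> ch Ob M g"
    and "\<forall>n. \<tau> n \<in> M"
  shows "safra_accepts \<alpha> ch Ob S g \<tau> \<longleftrightarrow>
           mdom (\<tau> 0) = S \<and> is_path \<tau> \<and> trace_cond \<alpha> \<tau>"
proof
  assume acc: "safra_accepts \<alpha> ch Ob S g \<tau>"
  have H: "\<forall>n. mdom (\<tau> n) = fst (safra_run S g \<tau> n)" using acc unfolding safra_accepts_def by blast
  interpret r: srun \<alpha> Ob S M ch g \<tau> using assms H by (simp add: srun_def)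
  obtain \<gamma> where "infinite {n. covered (r.bb n) \<gamma>}" "finite {n. \<gamma> \<notin> set (fst (r.bb n))}"
    using acc unfolding safra_accepts_def r.bb_def by blast
  then have "trace_cond \<alpha> \<tau>" using r.sound by blast
  moreover have "mdom (\<tau> 0) = S \<and> is_path \<tau>" using HP[where \<tau>=\<tau> and S=S and g=g] H by simp
  ultimately show "mdom (\<tau> 0) = S \<and> is_path \<tau> \<and> trace_cond \<alpha> \<tau>" by simp
next
  assume h: "mdom (\<tau> 0) = S \<and> is_path \<tau> \<and> trace_cond \<alpha> \<tau>"
  then have H: "\<forall>n. mdom (\<tau> n) = fst (safra_run S g \<tau> n)" using HP[where \<tau>=\<tau> and S=S and g=g] by simp
  interpret r: srun \<alpha> Ob S M ch g \<tau> using assms H by (simp add: srun_def)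
  obtain \<gamma> where "\<gamma> \<in> Kbar ch (safraK Ob) (card (UNIV :: 'a set))" "infinite {n. covered (r.bb n) \<gamma>}"
    "finite {n. \<gamma> \<notin> set (fst (r.bb n))}" using r.complete h by blast
  then show "safra_accepts \<alpha> ch Ob S g \<tau>" using H unfolding safra_accepts_def r.bb_def by blast
qed


end
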